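(* In the linear mixture MDP setting with Algorithm 1 as described in the context, with probability at least $1-\delta/2$, for all $k\in[K]$ and $h\in[H]$, $$\|\hat\theta_{k,h}-\theta_h\|_{\Lambda_{k,h}}\le\beta.$$
   Context: Episodic MDP with state set $\mathcal{S}$, action set $\mathcal{A}$, horizon $H$, transitions $P_h(\cdot|s,a)$, fixed initial state $s_1$. Linear mixture MDP: known $\phi:\mathcal{S}\times\mathcal{A}\times\mathcal{S}\to\mathbb{R}^d$ with $\|\sum_{s'}\phi(s,a,s')V(s')\|_2\le1$ for all $V:\mathcal{S}\to[0,1]$, and unknown $\theta_h$, $\|\theta_h\|_2\le B$, with $P_h(s'|s,a)=\theta_h^\top\phi(s,a,s')$. $\|x\|_M=\sqrt{x^\top Mx}$. Algorithm 1 (run for $K$ episodes, failure probability $\delta$): $\lambda=B^{-2}$, $\beta=H\sqrt{d\log(4H^3K\lambda^{-1}\delta^{-1})}+\sqrt\lambda B$, $\mathcal{V}=\{V:\mathcal{S}\to[0,H]\}$. For $k=1,\dots,K$: $V_{k,H+1}\equiv0$; for $h=H,\dots,1$: $\Lambda_{k,h}=\sum_{t<k}\phi_{t,h}(s_{t,h},a_{t,h})\phi_{t,h}(s_{t,h},a_{t,h})^\top+\lambda I$; $\hat\theta_{k,h}=\Lambda_{k,h}^{-1}\sum_{t<k}\phi_{t,h}(s_{t,h},a_{t,h})\tilde V_{t,h+1,s_{t,h},a_{t,h}}(s_{t,h+1})$; $\tilde V_{k,h+1,s,a}\in\arg\max_{V\in\mathcal{V}}\|\sum_{s'}\phi(s,a,s')V(s')\|_{\Lambda_{k,h}^{-1}}$;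 $\phi_{k,h}(s,a)=\sum_{s'}\phi(s,a,s')\tilde V_{k,h+1,s,a}(s')$; $u_{k,h}(s,a)=\beta\|\phi_{k,h}(s,a)\|_{\Lambda_{k,h}^{-1}}$; $Q_{k,h}(s,a)=\min\{\hat\theta_{k,h}^\top\sum_{s'}\phi(s,a,s')V_{k,h+1}(s')+2u_{k,h}(s,a),H\}$; $V_{k,h}(s)=\max_aQ_{k,h}(s,a)$, $\pi_{k,h}(s)\in\arg\max_aQ_{k,h}(s,a)$. Then $\pi_k$ is executed from $s_1$, producing $s_{k,h+1}\sim P_h(\cdot|s_{k,h},a_{k,h})$, $a_{k,h}=\pi_{k,h}(s_{k,h})$. *)

theory Defs
  imports "HOL-Analysis.Analysis" "HOL-Probability.Probability"
begin

(* A trajectory of one episode: states s_h (h = 1..H+1) and actions a_h (h = 1..H). *)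
type_synonym ('s,'a) traj = "(nat \<Rightarrow> 's) \<times> (nat \<Rightarrow> 'a)"

definition mnorm :: "real^'d^'d \<Rightarrow> real^'d \<Rightarrow> real" where
  "mnorm M x = sqrt (x \<bullet> (M *v x))"

definition outer :: "real^'d \<Rightarrow> real^'d^'d" where
  "outer x = (\<chi> i j. x$i * x$j)"

definition feat :: "('s::finite \<Rightarrow> 'a \<Rightarrow> 's \<Rightarrow> real^'d) \<Rightarrow> 's \<Rightarrow> 'a \<Rightarrow> ('s \<Rightarrow> real) \<Rightarrow> real^'d" where
  "feat \<phi> s a V = (\<Sum>s'\<in>UNIV. V s' *\<^sub>R \<phi> s a s')"

definition Vset :: "nat \<Rightarrow> ('s \<Rightarrow> real) set" where
  "Vset H = {V. \<forall>s. 0 \<le> V s \<and> V s \<le> real H}"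

definition trans :: "(nat \<Rightarrow> real^'d) \<Rightarrow> ('s \<Rightarrow> 'a \<Rightarrow> 's \<Rightarrow> real^'d) \<Rightarrow> nat \<Rightarrow> 's \<Rightarrow> 'a \<Rightarrow> 's pmf" where
  "trans \<theta> \<phi> h s a = embed_pmf (\<lambda>s'. \<theta> h \<bullet> \<phi> s a s')"

definition LamOf :: "real \<Rightarrow> ((real^'d) \<times> real) list \<Rightarrow> real^'d^'d" where
  "LamOf lam D = lam *\<^sub>R mat 1 + sum_list (map (\<lambda>(x,y). outer x) D)"

(* data phi lam selV hist h n: list of regression pairs
   (phi_{t,h}(s_{t,h},a_{t,h}), Vtilde_{t,h+1,s_{t,h},a_{t,h}}(s_{t,h+1})) for t = 1..n,
   where episode t is hist ! (t-1), and selV t h Lambda_{t,h} s a is the chosen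
   maximiser Vtilde_{t,h+1,s,a}. *)
primrec data :: "('s::finite \<Rightarrow> 'a \<Rightarrow> 's \<Rightarrow> real^'d) \<Rightarrow> real
    \<Rightarrow> (nat \<Rightarrow> nat \<Rightarrow> real^'d^'d \<Rightarrow> 's \<Rightarrow> 'a \<Rightarrow> ('s \<Rightarrow> real))
    \<Rightarrow> ('s,'a) traj list \<Rightarrow> nat \<Rightarrow> nat \<Rightarrow> ((real^'d) \<times> real) list" where
  "data \<phi> lam selV hist h 0 = []"
| "data \<phi> lam selV hist h (Suc n) =
     (let D = data \<phi> lam selV hist h n; S = fst (hist ! n); A = snd (hist ! n);
          V = selV (Suc n) h (LamOf lam D) (S h) (A h)
      in D @ [(feat \<phi> (S h) (A h) V, V (S (Suc h)))])"

definition Lam where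
  "Lam \<phi> lam selV hist k h = LamOf lam (data \<phi> lam selV hist h (k - 1))"

definition thetahat where
  "thetahat \<phi> lam selV hist k h =
     matrix_inv (Lam \<phi> lam selV hist k h) *v
       sum_list (map (\<lambda>(x,y). y *\<^sub>R x) (data \<phi> lam selV hist h (k - 1)))"

(* Q_{k,h}(s,a) given V_{k,h+1} = Vn *)
definition Qfun where
  "Qfun \<phi> (H::nat) lam \<beta> selV hist k h Vn s a =
     (let L = Lam \<phi> lam selV hist k h;
          u = \<beta> * mnorm (matrix_inv L) (feat \<phi> s a (selV k h L s a))
      in min (thetahat \<phi> lam selV hist k h \<bullet> feat \<phi> s a Vn + 2 * u) (real H))"

(* Vb ... k n = V_{k,H+1-n} *)
primrec Vb where
  "Vb \<phi> H lam \<beta> selV hist k 0 = (\<lambda>s. 0)"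
| "Vb \<phi> H lam \<beta> selV hist k (Suc n) =
     (\<lambda>s. Max (range (Qfun \<phi> H lam \<beta> selV hist k (H - n) (Vb \<phi> H lam \<beta> selV hist k n) s)))"

(* pi_{k,h}(s): the action chosen by the tie-breaking rule selA among maximisers of Q_{k,h}(s,.) *)
definition pol where
  "pol \<phi> H lam \<beta> selV selA hist k h s =
     selA k h (Qfun \<phi> H lam \<beta> selV hist k h (Vb \<phi> H lam \<beta> selV hist k (H - h)) s)"

primrec steps :: "(nat \<Rightarrow> 's \<Rightarrow> 'a \<Rightarrow> 's pmf) \<Rightarrow> (nat \<Rightarrow> 's \<Rightarrow> 'a) \<Rightarrow> nat \<Rightarrow> 's \<Rightarrow> nat
    \<Rightarrow> ('s,'a) traj pmf" where
  "steps P \<pi> h s 0 = return_pmf (\<lambda>_. s, \<lambda>_. \<pi> h s)"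
| "steps P \<pi> h s (Suc n) =
     bind_pmf (P h s (\<pi> h s))
       (\<lambda>s'. map_pmf (\<lambda>(S,A). (S(h := s), A(h := \<pi> h s))) (steps P \<pi> (Suc h) s' n))"

primrec run where
  "run \<theta> \<phi> H lam \<beta> selV selA s1 0 = return_pmf []"
| "run \<theta> \<phi> H lam \<beta> selV selA s1 (Suc k) =
     bind_pmf (run \<theta> \<phi> H lam \<beta> selV selA s1 k)
       (\<lambda>hist. map_pmf (\<lambda>\<tau>. hist @ [\<tau>])
          (steps (trans \<theta> \<phi>) (pol \<phi> H lam \<beta> selV selA hist (Suc k)) 1 s1 H))"

end

theory Submission
  imports Defs
begin


definition ouv :: "real^'n \<Rightarrow> real^'n \<Rightarrow> real^'n^'n" where
  "ouv u v = (\<chi> i j. u$i * v$j)"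

definition posdef :: "real^'n^'n \<Rightarrow> bool" where
  "posdef A \<longleftrightarrow> (\<forall>x. x \<noteq> 0 \<longrightarrow> 0 < x \<bullet> (A *v x))"

definition symm :: "real^'n^'n \<Rightarrow> bool" where
  "symm A \<longleftrightarrow> transpose A = A"

lemma row_mat1: "row i (mat 1 :: real^'n^'n) = axis i 1"
  by (auto simp: row_def mat_def axis_def vec_eq_iff)

lemma det_axis_row:
  fixes v :: "real^'n"
  shows "det ((\<chi> i. if i = j then v else axis i 1) :: real^'n^'n) = v$j"
proof -
  have h: "det ((\<chi> i. if i = j then sum (\<lambda>i. v$i *s axis i 1) UNIV
                             else axis i 1)::real^'n^'n) = v$j"
    using cramer_lemma_transpose[of j v "mat 1 :: real^'n^'n"] unfolding row_mat1 by simp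
  show ?thesis using h unfolding basis_expansion .
qed

lemma det_helper:
  fixes u v :: "real^'n"
  assumes "finite S" "j \<notin> S"
  shows "det ((\<chi> i. if i = j then v else if i \<in> S then axis i 1 + u$i *s v else axis i 1) :: real^'n^'n) = v$j"
  using assms
proof (induction S rule: finite_induct)
  case empty
  have "((\<chi> i. if i = j then v else if i \<in> {} then axis i 1 + u$i *s v else axis i 1) :: real^'n^'n)
     = (\<chi> i. if i = j then v else axis i 1)" by (intro arg_cong[where f=vec_lambda] ext) auto
  then show ?case using det_axis_row[of j v] by simp
next
  case (insert m S)
  define C where "C = (\<lambda>i. if i = j then v else if i \<in> S then axis i 1 + u$i *s v else axis i (1::real))"
  have mj: "m \<noteq> j" using insert by auto
  have eq: "((\<chi> i. if i = j then v else if i \<in> insert m S then axis i 1 + u$i *s v else axis i 1) :: real^'n^'n)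
      = (\<chi> i. if i = m then axis i 1 + u$i *s v else C i)"
    using mj by (auto simp: C_def vec_eq_iff)
  have e1: "((\<chi> i. if i = m then axis i 1 else C i) :: real^'n^'n) = (\<chi> i. C i)"
    using insert mj by (auto simp: C_def vec_eq_iff)
  have e2: "det ((\<chi> i. if i = m then v else C i) :: real^'n^'n) = 0"
    by (rule det_identical_rows[OF mj]) (auto simp: row_def C_def vec_eq_iff mj)
  have "det ((\<chi> i. if i = m then axis i 1 + u$i *s v else C i) :: real^'n^'n)
     = det ((\<chi> i. if i = m then axis i 1 else C i) :: real^'n^'n) + det ((\<chi> i. if i = m then u$i *s v else C i) :: real^'n^'n)"
    by (rule det_row_add)
  also have "det ((\<chi> i. if i = m then u$i *s v else C i) :: real^'n^'n) = det ((\<chi> i. if i = m then u$m *s v else C i) :: real^'n^'n)"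
    by (rule arg_cong[where f=det]) (auto simp: vec_eq_iff)
  also have "\<dots> = u$m * det ((\<chi> i. if i = m then v else C i) :: real^'n^'n)"
    by (rule det_row_mul)
  finally show ?case using e1 e2 eq insert by (simp add: C_def)
qed

lemma det_MS:
  fixes u v :: "real^'n"
  assumes "finite S"
  shows "det ((\<chi> i. if i \<in> S then axis i 1 + u$i *s v else axis i 1) :: real^'n^'n) = 1 + (\<Sum>i\<in>S. u$i * v$i)"
  using assms
proof (induction S rule: finite_induct)
  case empty
  have "((\<chi> i. axis i 1) :: real^'n^'n) = mat 1" by (auto simp: vec_eq_iff axis_def mat_def)
  then show ?case by simp
next
  case (insert m S)
  define C where "C = (\<lambda>i. if i \<in> S then axis i 1 + u$i *s v else axis i (1::real))"
  have eq: "((\<chi> i. if i \<in> insert m S then axis i 1 + u$i *s v else axis i 1) :: real^'n^'n)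
      = (\<chi> i. if i = m then axis i 1 + u$i *s v else C i)"
    by (auto simp: C_def vec_eq_iff)
  have e1: "((\<chi> i. if i = m then axis i 1 else C i) :: real^'n^'n) = (\<chi> i. C i)"
    using insert by (auto simp: C_def vec_eq_iff)
  have e2: "det ((\<chi> i. if i = m then v else C i) :: real^'n^'n) = v$m"
  proof -
    have "((\<chi> i. if i = m then v else C i) :: real^'n^'n) = (\<chi> i. if i = m then v else if i \<in> S then axis i 1 + u$i *s v else axis i 1)"
      by (auto simp: C_def vec_eq_iff)
    then show ?thesis using det_helper[OF insert(1) insert(2), of v u] by simp
  qed
  have "det ((\<chi> i. if i = m then axis i 1 + u$i *s v else C i) :: real^'n^'n)
     = det ((\<chi> i. if i = m then axis i 1 else C i) :: real^'n^'n) + det ((\<chi> i. if i = m then u$i *s v else C i) :: real^'n^'n)"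
    by (rule det_row_add)
  also have "det ((\<chi> i. if i = m then u$i *s v else C i) :: real^'n^'n) = det ((\<chi> i. if i = m then u$m *s v else C i) :: real^'n^'n)"
    by (rule arg_cong[where f=det]) (auto simp: vec_eq_iff)
  also have "\<dots> = u$m * det ((\<chi> i. if i = m then v else C i) :: real^'n^'n)"
    by (rule det_row_mul)
  finally show ?case using e1 e2 eq insert by (simp add: C_def)
qed

lemma det_rank_one: "det (mat 1 + ouv u v :: real^'n^'n) = 1 + v \<bullet> u"
proof -
  have "(mat 1 + ouv u v :: real^'n^'n) = (\<chi> i. if i \<in> UNIV then axis i 1 + u$i *s v else axis i 1)"
    by (auto simp: vec_eq_iff ouv_def mat_def axis_def)
  moreover have "(\<Sum>i\<in>UNIV. u$i * v$i) = v \<bullet> u" by (simp add: inner_vec_def mult.commute)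
  ultimately show ?thesis using det_MS[of UNIV u v] by simp
qed

lemma invertible_inv:
  assumes "invertible (A::real^'n^'n)"
  shows "A ** matrix_inv A = mat 1" "matrix_inv A ** A = mat 1"
proof -
  have "\<exists>A'. A ** A' = mat 1 \<and> A' ** A = mat 1" using assms by (simp add: invertible_def)
  then have "A ** matrix_inv A = mat 1 \<and> matrix_inv A ** A = mat 1"
    unfolding matrix_inv_def by (rule someI_ex)
  then show "A ** matrix_inv A = mat 1" "matrix_inv A ** A = mat 1" by auto
qed

lemma inv_mv:
  assumes "invertible (A::real^'n^'n)"
  shows "A *v (matrix_inv A *v x) = x" "matrix_inv A *v (A *v x) = x"
  using invertible_inv[OF assms] by (simp_all add: matrix_vector_mul_assoc)

lemma posdef_invertible:
  assumes "posdef (A::real^'n^'n)"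
  shows "invertible A"
proof -
  have "\<forall>x. A *v x = 0 \<longrightarrow> x = 0"
    using assms unfolding posdef_def by (metis inner_zero_right less_irrefl)
  then show ?thesis by (simp add: invertible_left_inverse matrix_left_invertible_ker)
qed

lemma symm_inner:
  assumes "symm A"
  shows "x \<bullet> ((A::real^'n^'n) *v y) = (A *v x) \<bullet> y"
proof -
  have "x \<bullet> (A *v y) = (x v* A) \<bullet> y" by (simp add: dot_lmul_matrix)
  also have "x v* A = A *v x" using assms transpose_matrix_vector[of A x] by (simp add: symm_def)
  finally show ?thesis .
qed

lemma symm_inv_inner:
  assumes "symm A" "invertible (A::real^'n^'n)"
  shows "x \<bullet> (matrix_inv A *v y) = (matrix_inv A *v x) \<bullet> y"
proof -
  have "x \<bullet> (matrix_inv A *v y) = (A *v (matrix_inv A *v x)) \<bullet> (matrix_inv A *v y)"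
    using inv_mv[OF assms(2)] by simp
  also have "\<dots> = (matrix_inv A *v x) \<bullet> (A *v (matrix_inv A *v y))"
    using symm_inner[OF assms(1)] by simp
  also have "\<dots> = (matrix_inv A *v x) \<bullet> y" using inv_mv[OF assms(2)] by simp
  finally show ?thesis .
qed

lemma outer_mv: "outer x *v y = (x \<bullet> y) *\<^sub>R x"
  by (simp add: outer_def matrix_vector_mult_def vec_eq_iff inner_vec_def sum_distrib_left mult.commute mult.left_commute)

lemma inner_outer: "z \<bullet> (outer x *v z) = (x \<bullet> z)^2"
  by (simp add: outer_mv power2_eq_square inner_commute)

lemma symm_outer: "symm (outer x)"
  by (simp add: symm_def outer_def transpose_def vec_eq_iff mult.commute)

lemma symm_add: "symm A \<Longrightarrow> symm B \<Longrightarrow> symm (A + B)"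
  by (simp add: symm_def transpose_def vec_eq_iff)

lemma symm_mat: "symm (c *\<^sub>R mat 1 :: real^'n^'n)"
  by (simp add: symm_def transpose_def vec_eq_iff mat_def)

lemma posdef_add_outer:
  assumes "posdef A" shows "posdef (A + outer x)"
  using assms unfolding posdef_def
  by (auto simp: matrix_vector_mult_add_rdistrib inner_add_right inner_outer intro: add_pos_nonneg)

lemma det_add_outer:
  assumes "invertible (V::real^'n^'n)"
  shows "det (V + outer x) = det V * (1 + x \<bullet> (matrix_inv V *v x))"
proof -
  define u where "u = matrix_inv V *v x"
  have Vu: "V *v u = x" using inv_mv[OF assms] by (simp add: u_def)
  have "V ** ouv u x = outer x"
  proof -
    have "(V ** ouv u x) $ i $ k = x$i * x$k" for i k
    proof -
      have "(V ** ouv u x) $ i $ k = (\<Sum>j\<in>UNIV. V$i$j * (u$j * x$k))"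
        by (simp add: matrix_matrix_mult_def ouv_def)
      also have "\<dots> = (V *v u)$i * x$k"
        by (simp add: matrix_vector_mult_def sum_distrib_right mult.assoc)
      finally show ?thesis using Vu by simp
    qed
    then show ?thesis by (simp add: vec_eq_iff outer_def)
  qed
  then have "V + outer x = V ** (mat 1 + ouv u x)"
    by (simp add: matrix_add_ldistrib)
  then have "det (V + outer x) = det V * (1 + x \<bullet> u)"
    by (simp add: det_mul det_rank_one)
  then show ?thesis by (simp add: u_def)
qed

lemma sherman_morrison:
  assumes sy: "symm V" and inv: "invertible (V::real^'n^'n)"
    and inv': "invertible (V + outer x)"
    and w: "1 + x \<bullet> (matrix_inv V *v x) \<noteq> 0"
  shows "matrix_inv (V + outer x) *v z = matrix_inv V *v z
           - (((matrix_inv V *v x) \<bullet> z) / (1 + x \<bullet> (matrix_inv V *v x))) *\<^sub>R (matrix_inv V *v x)"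
proof -
  define u where "u = matrix_inv V *v x"
  define w where "w = x \<bullet> u"
  define r where "r = matrix_inv V *v z - ((u \<bullet> z) / (1 + w)) *\<^sub>R u"
  have w1: "1 + w \<noteq> 0" using w by (simp add: w_def u_def)
  have Vu: "V *v u = x" using inv_mv[OF inv] by (simp add: u_def)
  have xz: "x \<bullet> (matrix_inv V *v z) = u \<bullet> z"
    using symm_inv_inner[OF sy inv] by (simp add: u_def)
  have "(V + outer x) *v r = z"
  proof -
    have "(V + outer x) *v r = V *v r + (x \<bullet> r) *\<^sub>R x"
      by (simp add: matrix_vector_mult_add_rdistrib outer_mv)
    also have "V *v r = z - ((u \<bullet> z) / (1 + w)) *\<^sub>R x"
      by (simp add: r_def matrix_vector_mult_diff_distrib inv_mv[OF inv] Vu matrix_vector_mult_scaleR)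
    also have "x \<bullet> r = u \<bullet> z - ((u \<bullet> z) / (1 + w)) * w"
      by (simp add: r_def inner_diff_right xz w_def)
    finally have "(V + outer x) *v r = z + (u \<bullet> z - ((u \<bullet> z) / (1 + w)) * w - (u \<bullet> z) / (1 + w)) *\<^sub>R x"
      by (simp add: algebra_simps)
    also have "u \<bullet> z - ((u \<bullet> z) / (1 + w)) * w - (u \<bullet> z) / (1 + w) = 0"
      using w1 by (simp add: field_simps)
    finally show ?thesis by simp
  qed
  then have "matrix_inv (V + outer x) *v z = r"
    using inv_mv(2)[OF inv', of r] by simp
  then show ?thesis by (simp add: r_def u_def w_def)
qed




lemma matrix_add_rdistrib: "((A::real^'n^'m) + B) ** (C::real^'k^'n) = (A ** C) + (B ** C)"
  by (vector matrix_matrix_mult_def sum.distrib[symmetric] field_simps)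

lemma axis_quad: "axis i 1 \<bullet> ((A::real^'n^'n) *v axis i 1) = A$i$i"
  unfolding inner_axis' matrix_vector_mult_basis by (simp add: column_def)

lemma posdef_diag: "posdef (A::real^'n^'n) \<Longrightarrow> 0 < A$i$i"
  unfolding posdef_def by (metis axis_quad axis_eq_0_iff zero_neq_one)

lemma symm_entry: "symm (A::real^'n^'n) \<Longrightarrow> A$i$k = A$k$i"
  unfolding symm_def by (metis transpose_def vec_lambda_beta)

definition elim :: "real^'n^'n \<Rightarrow> 'n \<Rightarrow> real^'n^'n" where
  "elim A j = A - (1 / A$j$j) *\<^sub>R outer (\<chi> i. A$i$j) + outer (axis j 1)"

lemma elim_entry: "elim A j $ i $ k = A$i$k - A$i$j * A$k$j / A$j$j + (if i = j \<and> k = j then 1 else 0)"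
  by (simp add: elim_def outer_def axis_def)

lemma elim_symm: "symm A \<Longrightarrow> symm (elim A j)"
  by (simp add: elim_def symm_add symm_outer symm_def transpose_def vec_eq_iff outer_def mult.commute)

lemma elim_row_j:
  assumes "symm A" "posdef A"
  shows "elim A j $ j $ k = (if k = j then 1 else 0)"
  using posdef_diag[OF assms(2), of j] symm_entry[OF assms(1), of k j]
  by (auto simp: elim_entry)

lemma elim_row_other:
  assumes "symm A" "i \<noteq> j" "\<forall>k. A$i$k = (if k = i then 1 else 0)"
  shows "elim A j $ i $ k = A$i$k"
  using assms by (simp add: elim_entry)

lemma elim_diag_le:
  assumes "posdef A" "i \<noteq> j"
  shows "elim A j $ i $ i \<le> A$i$i"
  using assms posdef_diag[OF assms(1), of j] by (simp add: elim_entry)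

lemma elim_quad:
  fixes A :: "real^'n^'n"
  assumes "symm A" "posdef A"
  shows "x \<bullet> (elim A j *v x) = (x - ((\<chi> i. A$i$j) \<bullet> x / A$j$j) *\<^sub>R axis j 1) \<bullet> (A *v (x - ((\<chi> i. A$i$j) \<bullet> x / A$j$j) *\<^sub>R axis j 1)) + (x$j)^2"
proof -
  define c where "c = (\<chi> i. A$i$j)"
  define a where "a = A$j$j"
  define e where "e = (axis j 1 :: real^'n)"
  have a0: "0 < a" using posdef_diag[OF assms(2)] by (simp add: a_def)
  have Ae: "A *v e = c" by (simp add: e_def c_def matrix_vector_mult_basis column_def)
  have eAx: "e \<bullet> (A *v x) = c \<bullet> x" using symm_inner[OF assms(1), of e x] Ae by simp
  have xAe: "x \<bullet> (A *v e) = c \<bullet> x" using Ae by (simp add: inner_commute)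
  have eAe: "e \<bullet> (A *v e) = a" using axis_quad[of j A] by (simp add: e_def a_def)
  have ex: "e \<bullet> x = x$j" by (simp add: e_def inner_axis')
  have "x \<bullet> (elim A j *v x) = x \<bullet> (A *v x) - (c \<bullet> x)^2 / a + (x$j)^2"
  proof -
    have "elim A j *v x = A *v x - (1/a) *\<^sub>R ((c \<bullet> x) *\<^sub>R c) + (e \<bullet> x) *\<^sub>R e"
      unfolding elim_def c_def[symmetric] a_def[symmetric] e_def[symmetric]
      by (simp only: matrix_vector_mult_add_rdistrib matrix_vector_mult_diff_rdistrib
        scaleR_matrix_vector_assoc[symmetric] outer_mv)
    then have "x \<bullet> (elim A j *v x) = x \<bullet> (A *v x) - (1/a) * ((c \<bullet> x) * (x \<bullet> c)) + (e \<bullet> x) * (x \<bullet> e)"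
      by (simp add: inner_add_right inner_diff_right)
    then show ?thesis using ex by (simp add: inner_commute power2_eq_square)
  qed
  moreover have "(x - ((c \<bullet> x) / a) *\<^sub>R e) \<bullet> (A *v (x - ((c \<bullet> x) / a) *\<^sub>R e))
      = x \<bullet> (A *v x) - (c \<bullet> x)^2 / a"
  proof -
    have "(x - ((c \<bullet> x) / a) *\<^sub>R e) \<bullet> (A *v (x - ((c \<bullet> x) / a) *\<^sub>R e))
       = x \<bullet> (A *v x) - ((c \<bullet> x) / a) * (x \<bullet> (A *v e)) - ((c \<bullet> x) / a) * (e \<bullet> (A *v x))
         + ((c \<bullet> x) / a) * ((c \<bullet> x) / a) * (e \<bullet> (A *v e))"
      by (simp add: matrix_vector_mult_diff_distrib matrix_vector_mult_scaleR inner_diff_left inner_diff_right algebra_simps)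
    also have "\<dots> = x \<bullet> (A *v x) - (c \<bullet> x)^2 / a"
      using a0 unfolding xAe eAx eAe by (simp add: field_simps power2_eq_square)
    finally show ?thesis .
  qed
  ultimately show ?thesis by (simp add: c_def a_def e_def)
qed

lemma elim_posdef:
  fixes A :: "real^'n^'n"
  assumes "symm A" "posdef A"
  shows "posdef (elim A j)"
  unfolding posdef_def
proof (intro allI impI)
  fix x :: "real^'n"
  assume x0: "x \<noteq> 0"
  define z where "z = x - ((\<chi> i. A$i$j) \<bullet> x / A$j$j) *\<^sub>R axis j 1"
  have q: "x \<bullet> (elim A j *v x) = z \<bullet> (A *v z) + (x$j)^2"
    using elim_quad[OF assms] by (simp add: z_def)
  show "0 < x \<bullet> (elim A j *v x)"
  proof (cases "z = 0")
    case True
    then have xe: "x = ((\<chi> i. A$i$j) \<bullet> x / A$j$j) *\<^sub>R axis j 1" by (simp add: z_def)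
    define t where "t = (\<chi> i. A$i$j) \<bullet> x / A$j$j"
    have xe': "x = t *\<^sub>R axis j 1" using xe by (simp add: t_def)
    have "x$j = t" by (subst xe') (simp add: axis_def)
    then have "x$j \<noteq> 0" using x0 xe' by auto
    then show ?thesis using q True by simp
  next
    case False
    then have "0 < z \<bullet> (A *v z)" using assms(2) by (simp add: posdef_def)
    then show ?thesis using q by (simp add: add_pos_nonneg)
  qed
qed

lemma elim_det:
  fixes A :: "real^'n^'n"
  assumes "symm A" "posdef A"
  shows "det A = A$j$j * det (elim A j)"
proof -
  define a where "a = A$j$j"
  define c where "c = (\<chi> i. A$i$j)"
  define e where "e = (axis j 1 :: real^'n)"
  define u where "u = (- (1/a)) *\<^sub>R (c - a *\<^sub>R e)"
  define L where "L = mat 1 + ouv u e"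
  have a0: "0 < a" using posdef_diag[OF assms(2)] by (simp add: a_def)
  have detL: "det L = 1"
    unfolding L_def det_rank_one e_def inner_axis' using a0 by (simp add: u_def c_def a_def e_def)
  have LA: "L ** A = (\<chi> i. if i = j then row j A else row i (elim A j))"
  proof -
    have "(L ** A) $ i $ k = (if i = j then row j A else row i (elim A j)) $ k" for i k
    proof -
      have "(ouv u e ** A) $ i $ k = (\<Sum>m\<in>UNIV. u$i * (if m = j then 1 else 0) * A$m$k)"
        by (simp add: matrix_matrix_mult_def ouv_def e_def axis_def)
      also have "\<dots> = (\<Sum>m\<in>UNIV. if m = j then u$i * A$j$k else 0)"
        by (rule sum.cong) auto
      also have "\<dots> = u$i * A$j$k" by simp
      finally have "(L ** A) $ i $ k = A$i$k + u$i * A$j$k"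
        by (simp add: L_def matrix_add_rdistrib)
      also have "\<dots> = (if i = j then row j A else row i (elim A j)) $ k"
      proof (cases "i = j")
        case True
        then show ?thesis by (simp add: u_def c_def e_def row_def a_def)
      next
        case False
        have "u$i = - (A$i$j / a)" using False by (simp add: u_def c_def e_def axis_def)
        then show ?thesis using False symm_entry[OF assms(1), of j k]
          by (simp add: row_def elim_entry a_def)
      qed
      finally show ?thesis .
    qed
    then show ?thesis by (simp add: vec_eq_iff)
  qed
  define r where "r = row j A - a *s e"
  have rowsplit: "row j A = a *s e + r" by (simp add: r_def)
  have "det A = det (L ** A)" by (simp add: det_mul detL)
  also have "\<dots> = det (\<chi> i. if i = j then a *s e + r else row i (elim A j))"
    unfolding LA rowsplit ..
  also have "\<dots> = det (\<chi> i. if i = j then a *s e else row i (elim A j)) + det (\<chi> i. if i = j then r else row i (elim A j))"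
    by (rule det_row_add)
  also have "det (\<chi> i. if i = j then a *s e else row i (elim A j)) = a * det (\<chi> i. if i = j then e else row i (elim A j))"
    by (rule det_row_mul)
  also have "(\<chi> i. if i = j then e else row i (elim A j)) = elim A j"
    using elim_row_j[OF assms] by (auto simp: vec_eq_iff e_def row_def axis_def)
  also have "det (\<chi> i. if i = j then r else row i (elim A j)) = 0"
  proof (rule det_zero_column(1)[of j])
    show "column j (\<chi> i. if i = j then r else row i (elim A j)) = 0"
    proof -
      have "(\<chi> i. if i = j then r else row i (elim A j)) $ i $ j = 0" for i
      proof (cases "i = j")
        case True
        then show ?thesis by (simp add: r_def e_def row_def a_def)
      next
        case False
        then show ?thesis using a0 by (simp add: row_def elim_entry a_def)
      qed
      then show ?thesis by (simp add: column_def vec_eq_iff)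
    qed
  qed
  finally show ?thesis by (simp add: a_def)
qed

lemma hadamard_aux:
  "card {i. row i A \<noteq> axis i 1} = n \<Longrightarrow> symm A \<Longrightarrow> posdef A \<Longrightarrow> det (A::real^'n^'n) \<le> (\<Prod>i\<in>UNIV. A$i$i)"
proof (induction n arbitrary: A rule: less_induct)
  case (less n)
  show ?case
  proof (cases "{i. row i A \<noteq> axis i 1} = {}")
    case True
    then have "A = mat 1" by (auto simp: vec_eq_iff row_def axis_def mat_def)
    moreover have "\<forall>i. (mat 1::real^'n^'n)$i$i = 1" by (simp add: mat_def)
    ultimately show ?thesis by simp
  next
    case False
    then obtain j where j: "row j A \<noteq> axis j 1" by auto
    define A' where "A' = elim A j"
    have sub: "{i. row i A' \<noteq> axis i 1} \<subseteq> {i. row i A \<noteq> axis i 1} - {j}"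
    proof
      fix i assume i: "i \<in> {i. row i A' \<noteq> axis i 1}"
      have "i \<noteq> j" using i elim_row_j[OF less(3,4)] by (auto simp: A'_def row_def axis_def vec_eq_iff)
      moreover have "row i A \<noteq> axis i 1"
      proof
        assume "row i A = axis i 1"
        then have "\<forall>k. A$i$k = (if k = i then 1 else 0)" by (auto simp: row_def axis_def vec_eq_iff)
        then have "row i A' = axis i 1" using elim_row_other[OF less(3) \<open>i \<noteq> j\<close>]
          by (auto simp: A'_def row_def axis_def vec_eq_iff)
        then show False using i by simp
      qed
      ultimately show "i \<in> {i. row i A \<noteq> axis i 1} - {j}" by simp
    qed
    have "card {i. row i A' \<noteq> axis i 1} < n"
    proof -
      have "card {i. row i A' \<noteq> axis i 1} \<le> card ({i. row i A \<noteq> axis i 1} - {j})"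
        by (rule card_mono[OF _ sub]) simp
      also have "\<dots> < card {i. row i A \<noteq> axis i 1}"
        using j by (intro card_Diff1_less) auto
      finally show ?thesis using less(2) by simp
    qed
    then have IH: "det A' \<le> (\<Prod>i\<in>UNIV. A'$i$i)"
      using less(1) elim_symm[OF less(3)] elim_posdef[OF less(3,4)] by (auto simp: A'_def)
    have a0: "0 < A$j$j" using posdef_diag[OF less(4)] .
    have "(\<Prod>i\<in>UNIV. A'$i$i) = A'$j$j * (\<Prod>i\<in>UNIV-{j}. A'$i$i)"
      by (simp add: prod.remove)
    also have "A'$j$j = 1" using elim_row_j[OF less(3,4)] by (simp add: A'_def)
    also have "(\<Prod>i\<in>UNIV-{j}. A'$i$i) \<le> (\<Prod>i\<in>UNIV-{j}. A$i$i)"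
      using posdef_diag[OF elim_posdef[OF less(3,4)]] elim_diag_le[OF less(4)]
      by (intro prod_mono) (auto simp: A'_def less_imp_le)
    finally have "det A' \<le> (\<Prod>i\<in>UNIV-{j}. A$i$i)" using IH by simp
    then have "A$j$j * det A' \<le> A$j$j * (\<Prod>i\<in>UNIV-{j}. A$i$i)"
      using a0 by simp
    also have "\<dots> = (\<Prod>i\<in>UNIV. A$i$i)" by (simp add: prod.remove)
    finally show ?thesis using elim_det[OF less(3,4)] by (simp add: A'_def)
  qed
qed

lemma hadamard: "symm A \<Longrightarrow> posdef A \<Longrightarrow> det (A::real^'n^'n) \<le> (\<Prod>i\<in>UNIV. A$i$i)"
  using hadamard_aux by blast



definition SS :: "real^'d \<Rightarrow> ((real^'d) \<times> real) list \<Rightarrow> real^'d" where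
  "SS \<theta> D = sum_list (map (\<lambda>(x,y). (y - \<theta> \<bullet> x) *\<^sub>R x) D)"

definition qf :: "real \<Rightarrow> real^'d \<Rightarrow> ((real^'d) \<times> real) list \<Rightarrow> real" where
  "qf lam \<theta> D = SS \<theta> D \<bullet> (matrix_inv (LamOf lam D) *v SS \<theta> D)"

definition ld :: "real \<Rightarrow> ((real^'d) \<times> real) list \<Rightarrow> real" where
  "ld lam D = ln (det (LamOf lam D)) - real CARD('d) * ln lam"

definition GG :: "real \<Rightarrow> real \<Rightarrow> real^'d \<Rightarrow> ((real^'d) \<times> real) list \<Rightarrow> real" where
  "GG Hr lam \<theta> D = qf lam \<theta> D - Hr\<^sup>2 * ld lam D"

lemma LamOf_snoc: "LamOf lam (D @ [(x,y)]) = LamOf lam D + outer x"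
  by (simp add: LamOf_def add.assoc)

lemma SS_snoc: "SS \<theta> (D @ [(x,y)]) = SS \<theta> D + (y - \<theta> \<bullet> x) *\<^sub>R x"
  by (simp add: SS_def)

lemma LamOf_symm: "symm (LamOf lam D)"
proof (induction D rule: rev_induct)
  case Nil
  then show ?case by (simp add: LamOf_def symm_mat)
next
  case (snoc p D)
  then show ?case by (cases p) (simp add: LamOf_snoc symm_add symm_outer)
qed

lemma LamOf_quad_ge: "0 < lam \<Longrightarrow> lam * (z \<bullet> z) \<le> z \<bullet> (LamOf lam D *v z)"
proof (induction D rule: rev_induct)
  case Nil
  have "(lam *\<^sub>R mat 1 :: real^'a^'a) *v z = lam *\<^sub>R z"
    by (simp add: scaleR_matrix_vector_assoc[symmetric])
  then show ?case by (simp add: LamOf_def)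
next
  case (snoc p D)
  obtain x y where p: "p = (x,y)" by (cases p)
  have "z \<bullet> (LamOf lam (D @ [p]) *v z) = z \<bullet> (LamOf lam D *v z) + (x \<bullet> z)^2"
    by (simp add: p LamOf_snoc matrix_vector_mult_add_rdistrib inner_add_right inner_outer)
  then show ?case using snoc by (smt (verit) zero_le_power2)
qed

lemma LamOf_posdef: "0 < lam \<Longrightarrow> posdef (LamOf lam D)"
  unfolding posdef_def
proof (intro allI impI)
  fix z :: "real^'a" assume "0 < lam" "z \<noteq> 0"
  then have "0 < lam * (z \<bullet> z)" by simp
  also have "\<dots> \<le> z \<bullet> (LamOf lam D *v z)" using LamOf_quad_ge[OF \<open>0 < lam\<close>] .
  finally show "0 < z \<bullet> (LamOf lam D *v z)" .
qed

lemma LamOf_inv: "0 < lam \<Longrightarrow> invertible (LamOf lam D)"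
  by (rule posdef_invertible[OF LamOf_posdef])

lemma inv_psd:
  assumes "posdef V" "symm V"
  shows "0 \<le> x \<bullet> (matrix_inv V *v x)"
proof -
  have inv: "invertible V" by (rule posdef_invertible[OF assms(1)])
  define y where "y = matrix_inv V *v x"
  have "x = V *v y" using inv_mv[OF inv] by (simp add: y_def)
  then have "x \<bullet> (matrix_inv V *v x) = (V *v y) \<bullet> y" by (simp add: y_def)
  also have "\<dots> = y \<bullet> (V *v y)" by (simp add: inner_commute)
  finally show ?thesis using assms(1) unfolding posdef_def
    by (cases "y = 0") (auto intro: less_imp_le)
qed

lemma inv_quad_le:
  assumes "0 < lam"
  shows "t \<bullet> (matrix_inv (LamOf lam D) *v t) \<le> (norm t)^2 / lam"
proof -
  have inv: "invertible (LamOf lam D)" by (rule LamOf_inv[OF assms])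
  define y where "y = matrix_inv (LamOf lam D) *v t"
  have ty: "t = LamOf lam D *v y" using inv_mv[OF inv] by (simp add: y_def)
  have q: "t \<bullet> y = y \<bullet> (LamOf lam D *v y)" by (simp add: ty inner_commute)
  have ge: "lam * (y \<bullet> y) \<le> t \<bullet> y" using q LamOf_quad_ge[OF assms] by simp
  have cs: "t \<bullet> y \<le> norm t * norm y" by (rule norm_cauchy_schwarz)
  have ny: "y \<bullet> y = (norm y)^2" by (simp add: power2_norm_eq_inner)
  have "lam * (norm y)^2 \<le> norm t * norm y" using ge cs ny by simp
  then have "lam * norm y \<le> norm t"
    by (cases "norm y = 0") (auto simp: power2_eq_square mult.assoc[symmetric])
  then have "norm y \<le> norm t / lam" using assms by (simp add: field_simps)
  then have "t \<bullet> y \<le> norm t * (norm t / lam)" using cs by (smt (verit) mult_left_mono norm_ge_zero)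
  then show ?thesis by (simp add: y_def power2_eq_square)
qed

lemma det_LamOf_snoc:
  assumes "0 < lam"
  shows "det (LamOf lam (D @ [(x,y)])) = det (LamOf lam D) * (1 + x \<bullet> (matrix_inv (LamOf lam D) *v x))"
  unfolding LamOf_snoc by (rule det_add_outer[OF LamOf_inv[OF assms]])

lemma det_LamOf_base: "det (LamOf lam [] :: real^'d^'d) = lam ^ CARD('d)"
proof -
  have "det (lam *\<^sub>R mat 1 :: real^'d^'d) = (\<Prod>i\<in>(UNIV::'d set). lam)"
    by (subst det_diagonal) (auto simp: mat_def)
  then show ?thesis by (simp add: LamOf_def)
qed

lemma det_LamOf_pos: "0 < lam \<Longrightarrow> 0 < det (LamOf lam D)"
proof (induction D rule: rev_induct)
  case Nil
  then show ?case by (simp add: det_LamOf_base)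
next
  case (snoc p D)
  obtain x y where p: "p = (x,y)" by (cases p)
  have "0 \<le> x \<bullet> (matrix_inv (LamOf lam D) *v x)"
    by (rule inv_psd[OF LamOf_posdef[OF snoc(2)] LamOf_symm])
  then show ?case using snoc det_LamOf_snoc[OF snoc(2), of D x y] by (simp add: p)
qed

lemma qf_snoc:
  fixes D :: "((real^'d) \<times> real) list" and x \<theta> :: "real^'d" and y :: real
  assumes "0 < lam"
  defines "V \<equiv> LamOf lam D"
  defines "a \<equiv> x \<bullet> (matrix_inv V *v SS \<theta> D)"
  defines "w \<equiv> x \<bullet> (matrix_inv V *v x)"
  defines "\<eta> \<equiv> y - \<theta> \<bullet> x"
  shows "qf lam \<theta> (D @ [(x,y)]) = qf lam \<theta> D + (2 * \<eta> * a + \<eta>^2 * w - a^2) / (1 + w)"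
proof -
  have sy: "symm V" by (simp add: V_def LamOf_symm)
  have inv: "invertible V" by (simp add: V_def LamOf_inv[OF assms(1)])
  have "V + outer x = LamOf lam (D @ [(x,y)])" by (simp add: V_def LamOf_snoc)
  then have inv': "invertible (V + outer x)" using LamOf_inv[OF assms(1)] by metis
  have w0: "0 \<le> w" unfolding w_def V_def by (rule inv_psd[OF LamOf_posdef[OF assms(1)] LamOf_symm])
  define S where "S = SS \<theta> D"
  define u where "u = matrix_inv V *v x"
  define S' where "S' = S + \<eta> *\<^sub>R x"
  have w1: "1 + w \<noteq> 0" using w0 by simp
  have SM: "matrix_inv (V + outer x) *v S' = matrix_inv V *v S' - ((u \<bullet> S') / (1 + w)) *\<^sub>R u"
    using sherman_morrison[OF sy inv inv'] w1 by (simp add: u_def w_def)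
  have uS: "u \<bullet> S = a" using symm_inv_inner[OF sy inv, of x S] by (simp add: a_def u_def S_def)
  have ux: "u \<bullet> x = w" by (simp add: u_def w_def inner_commute)
  have Su: "S \<bullet> u = a" using uS by (simp add: inner_commute)
  have xVS: "x \<bullet> (matrix_inv V *v S) = a" by (simp add: a_def S_def)
  have SVx: "S \<bullet> (matrix_inv V *v x) = a" using Su by (simp add: u_def)
  have "S' \<bullet> (matrix_inv V *v S') = S \<bullet> (matrix_inv V *v S) + 2 * \<eta> * a + \<eta>^2 * w"
    unfolding S'_def
    by (simp add: matrix_vector_right_distrib matrix_vector_mult_scaleR inner_add_left inner_add_right
        xVS SVx w_def[symmetric] power2_eq_square algebra_simps)
  moreover have "u \<bullet> S' = a + \<eta> * w" by (simp add: S'_def inner_add_right uS ux)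
  moreover have "S' \<bullet> u = a + \<eta> * w" by (simp add: S'_def inner_add_left SVx u_def w_def)
  ultimately have "S' \<bullet> (matrix_inv (V + outer x) *v S') = S \<bullet> (matrix_inv V *v S) + 2 * \<eta> * a + \<eta>^2 * w - (a + \<eta> * w)^2 / (1 + w)"
    unfolding SM by (simp add: inner_diff_right power2_eq_square)
  also have "\<dots> = S \<bullet> (matrix_inv V *v S) + (2 * \<eta> * a + \<eta>^2 * w - a^2) / (1 + w)"
    using w1 w0 by (simp add: field_simps power2_eq_square)
  finally show ?thesis
    by (simp add: qf_def SS_snoc LamOf_snoc V_def[symmetric] S_def[symmetric] S'_def \<eta>_def)
qed

lemma ld_snoc:
  assumes "0 < lam"
  shows "ld lam (D @ [(x,y)]) = ld lam D + ln (1 + x \<bullet> (matrix_inv (LamOf lam D) *v x))"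
proof -
  have w0: "0 \<le> x \<bullet> (matrix_inv (LamOf lam D) *v x)"
    by (rule inv_psd[OF LamOf_posdef[OF assms(1)] LamOf_symm])
  have "0 < det (LamOf lam D)" by (rule det_LamOf_pos[OF assms])
  then show ?thesis using w0
    by (simp add: ld_def det_LamOf_snoc[OF assms] ln_mult)
qed

lemma ln_ge_frac: "0 \<le> w \<Longrightarrow> w / (1 + w) \<le> ln (1 + (w::real))"
proof -
  assume w: "0 \<le> w"
  have "ln (1 / (1 + w)) \<le> 1 / (1 + w) - 1" by (rule ln_le_minus_one) (use w in simp)
  moreover have "ln (1 / (1 + w)) = - ln (1 + w)" using w by (simp add: ln_div)
  moreover have "1 / (1 + w) - 1 = - (w / (1 + w))" using w by (simp add: field_simps)
  ultimately show ?thesis by simp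
qed

lemma GG_snoc_le:
  fixes D :: "((real^'d) \<times> real) list" and x \<theta> :: "real^'d" and y :: real
  assumes "0 < lam" "(y - \<theta> \<bullet> x)^2 \<le> Hr^2"
  defines "a \<equiv> x \<bullet> (matrix_inv (LamOf lam D) *v SS \<theta> D)"
  defines "w \<equiv> x \<bullet> (matrix_inv (LamOf lam D) *v x)"
  shows "GG Hr lam \<theta> (D @ [(x,y)]) \<le> GG Hr lam \<theta> D + (2 * (y - \<theta> \<bullet> x) * a - a^2) / (1 + w)"
proof -
  define \<eta> where "\<eta> = y - \<theta> \<bullet> x"
  have w0: "0 \<le> w" unfolding w_def by (rule inv_psd[OF LamOf_posdef[OF assms(1)] LamOf_symm])
  have "\<eta>^2 * w / (1 + w) \<le> Hr^2 * (w / (1 + w))"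
    using assms(2) w0 by (simp add: \<eta>_def divide_right_mono mult_right_mono)
  also have "\<dots> \<le> Hr^2 * ln (1 + w)" by (intro mult_left_mono ln_ge_frac w0) simp
  finally have key: "\<eta>^2 * w / (1 + w) \<le> Hr^2 * ln (1 + w)" .
  have "GG Hr lam \<theta> (D @ [(x,y)]) = GG Hr lam \<theta> D + (2 * \<eta> * a + \<eta>^2 * w - a^2) / (1 + w) - Hr^2 * ln (1 + w)"
    unfolding GG_def qf_snoc[OF assms(1)] ld_snoc[OF assms(1)]
    by (simp add: a_def w_def \<eta>_def algebra_simps)
  also have "(2 * \<eta> * a + \<eta>^2 * w - a^2) / (1 + w) = (2 * \<eta> * a - a^2) / (1 + w) + \<eta>^2 * w / (1 + w)"
    by (simp add: add_divide_distrib diff_divide_distrib)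
  finally show ?thesis using key by (simp add: \<eta>_def)
qed



lemma hoeff_pmf:
  fixes q :: "'s pmf" and v :: "'s \<Rightarrow> real"
  assumes v0: "\<And>s. 0 \<le> v s" and v1: "\<And>s. v s \<le> Hr"
  shows "(\<integral>\<^sup>+s. ennreal (exp (\<sigma> * (v s - measure_pmf.expectation q v))) \<partial>q) \<le> ennreal (exp (\<sigma>^2 * Hr^2 / 8))"
proof -
  consider "\<sigma> > 0" | "\<sigma> < 0" | "\<sigma> = 0" by linarith
  then show ?thesis
  proof cases
    case 1
    interpret I: interval_bounded_random_variable "measure_pmf q" v 0 Hr
      by unfold_locales (auto simp: v0 v1)
    show ?thesis using I.Hoeffdings_lemma_nn_integral[OF 1] by simp
  next
    case 2
    interpret I: interval_bounded_random_variable "measure_pmf q" "\<lambda>s. - v s" "- Hr" 0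
      by unfold_locales (auto simp: v0 v1)
    have "-\<sigma> > 0" using 2 by simp
    from I.Hoeffdings_lemma_nn_integral[OF this]
    show ?thesis by (simp add: algebra_simps)
  next
    case 3
    then show ?thesis by (simp add: measure_pmf.emeasure_space_1)
  qed
qed

lemma expectation_bounds:
  fixes q :: "'s pmf" and v :: "'s \<Rightarrow> real"
  assumes v0: "\<And>s. 0 \<le> v s" and v1: "\<And>s. v s \<le> Hr"
  shows "0 \<le> measure_pmf.expectation q v" "measure_pmf.expectation q v \<le> Hr"
proof -
  interpret I: interval_bounded_random_variable "measure_pmf q" v 0 Hr
    by unfold_locales (auto simp: v0 v1)
  show "0 \<le> measure_pmf.expectation q v" by (rule integral_nonneg_AE) (simp add: v0)
  have "measure_pmf.expectation q v \<le> measure_pmf.expectation q (\<lambda>_. Hr)"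
    by (rule integral_mono) (auto simp: v1 I.integrable)
  then show "measure_pmf.expectation q v \<le> Hr" by simp
qed

lemma stepb:
  fixes q :: "'s pmf" and V :: "'s \<Rightarrow> real" and D :: "((real^'d) \<times> real) list" and x \<theta> :: "real^'d"
  assumes lam: "0 < lam" and Hr: "0 < Hr" and V0: "\<And>s. 0 \<le> V s" and V1: "\<And>s. V s \<le> Hr"
    and m: "measure_pmf.expectation q V = \<theta> \<bullet> x"
  shows "(\<integral>\<^sup>+s. ennreal (exp (2 / Hr^2 * GG Hr lam \<theta> (D @ [(x, V s)]))) \<partial>q)
           \<le> ennreal (exp (2 / Hr^2 * GG Hr lam \<theta> D))"
proof -
  define c where "c = 2 / Hr^2"
  define a where "a = x \<bullet> (matrix_inv (LamOf lam D) *v SS \<theta> D)"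
  define w where "w = x \<bullet> (matrix_inv (LamOf lam D) *v x)"
  define \<sigma> where "\<sigma> = 2 * c * a / (1 + w)"
  define K0 where "K0 = exp (c * GG Hr lam \<theta> D - c * a^2 / (1 + w))"
  have w0: "0 \<le> w" unfolding w_def by (rule inv_psd[OF LamOf_posdef[OF lam] LamOf_symm])
  have c0: "0 < c" using Hr by (simp add: c_def)
  have mb: "0 \<le> \<theta> \<bullet> x" "\<theta> \<bullet> x \<le> Hr" using expectation_bounds[of V Hr q, OF V0 V1] m by auto
  have K0pos: "0 \<le> K0" by (simp add: K0_def)
  have pt: "exp (c * GG Hr lam \<theta> (D @ [(x, V s)])) \<le> K0 * exp (\<sigma> * (V s - measure_pmf.expectation q V))" for s
  proof -
    have "(V s - \<theta> \<bullet> x)^2 \<le> Hr^2"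
      using V0[of s] V1[of s] mb by (intro power2_le_iff_abs_le[THEN iffD2]) (use Hr in auto)
    from GG_snoc_le[OF lam this]
    have "GG Hr lam \<theta> (D @ [(x, V s)]) \<le> GG Hr lam \<theta> D + (2 * (V s - \<theta> \<bullet> x) * a - a^2) / (1 + w)"
      by (simp add: a_def w_def)
    then have "c * GG Hr lam \<theta> (D @ [(x, V s)]) \<le> c * (GG Hr lam \<theta> D + (2 * (V s - \<theta> \<bullet> x) * a - a^2) / (1 + w))"
      using c0 by (intro mult_left_mono) auto
    then have "c * GG Hr lam \<theta> (D @ [(x, V s)]) \<le> c * GG Hr lam \<theta> D + c * ((2 * (V s - \<theta> \<bullet> x) * a - a^2) / (1 + w))"
      by (simp only: distrib_left)
    also have "\<dots> = (c * GG Hr lam \<theta> D - c * a^2 / (1 + w)) + \<sigma> * (V s - measure_pmf.expectation q V)"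
    proof -
      have w1: "1 + w \<noteq> 0" using w0 by simp
      have "c * ((2 * (V s - \<theta> \<bullet> x) * a - a^2) / (1 + w)) = \<sigma> * (V s - \<theta> \<bullet> x) - c * a^2 / (1 + w)"
        unfolding \<sigma>_def by (simp add: diff_divide_distrib right_diff_distrib mult.commute mult.left_commute)
      then show ?thesis by (simp add: m)
    qed
    finally show ?thesis by (simp add: K0_def exp_add[symmetric])
  qed
  have "(\<integral>\<^sup>+s. ennreal (exp (c * GG Hr lam \<theta> (D @ [(x, V s)]))) \<partial>q)
      \<le> (\<integral>\<^sup>+s. ennreal K0 * ennreal (exp (\<sigma> * (V s - measure_pmf.expectation q V))) \<partial>q)"
    using pt by (intro nn_integral_mono) (simp add: ennreal_mult[symmetric] K0pos ennreal_leI)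
  also have "\<dots> = ennreal K0 * (\<integral>\<^sup>+s. ennreal (exp (\<sigma> * (V s - measure_pmf.expectation q V))) \<partial>q)"
    by (rule nn_integral_cmult) simp
  also have "\<dots> \<le> ennreal K0 * ennreal (exp (\<sigma>^2 * Hr^2 / 8))"
    by (intro mult_left_mono hoeff_pmf V0 V1) simp
  also have "\<dots> = ennreal (K0 * exp (\<sigma>^2 * Hr^2 / 8))"
    by (simp add: ennreal_mult K0_def)
  also have "\<dots> \<le> ennreal (exp (c * GG Hr lam \<theta> D))"
  proof (rule ennreal_leI)
    have e: "\<sigma>^2 * Hr^2 / 8 = c * a^2 / (1 + w)^2"
    proof -
      have "1 + w \<noteq> 0" "Hr \<noteq> 0" using Hr w0 by auto
      then show ?thesis by (simp add: \<sigma>_def c_def power_divide power_mult_distrib divide_simps)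
    qed
    have "c * a^2 / (1 + w)^2 \<le> c * a^2 / (1 + w)"
    proof -
      have "c * a^2 / (1 + w)^2 = (c * a^2 / (1 + w)) / (1 + w)" by (simp add: power2_eq_square)
      also have "\<dots> \<le> c * a^2 / (1 + w)"
        using divide_left_mono[of 1 "1 + w" "c * a^2 / (1 + w)"] w0 c0 by simp
      finally show ?thesis .
    qed
    then show "K0 * exp (\<sigma>^2 * Hr^2 / 8) \<le> exp (c * GG Hr lam \<theta> D)"
      unfolding K0_def e exp_add[symmetric] by simp
  qed
  finally show ?thesis by (simp add: c_def)
qed



lemma steps_start: "\<tau> \<in> set_pmf (steps P \<pi> h0 s n) \<Longrightarrow> fst \<tau> h0 = s"
proof (induction n arbitrary: h0 s \<tau>)
  case 0
  then show ?case by auto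
next
  case (Suc n)
  then show ?case by (auto simp: split_beta)
qed

lemma nn_integral_pmf_const_AE:
  assumes "\<And>x. x \<in> set_pmf M \<Longrightarrow> f x = c"
  shows "(\<integral>\<^sup>+x. f x \<partial>measure_pmf M) = c"
proof -
  have "(\<integral>\<^sup>+x. f x \<partial>measure_pmf M) = (\<integral>\<^sup>+x. c \<partial>measure_pmf M)"
    by (rule nn_integral_cong_AE) (auto simp: AE_measure_pmf_iff assms)
  also have "\<dots> = c" by (simp add: measure_pmf.emeasure_space_1)
  finally show ?thesis .
qed

lemma steps_exp:
  fixes F :: "'s \<Rightarrow> 'a \<Rightarrow> 's \<Rightarrow> ennreal"
  assumes "h0 \<le> h" "h < h0 + n"
  shows "(\<integral>\<^sup>+\<tau>. F (fst \<tau> h) (snd \<tau> h) (fst \<tau> (Suc h)) \<partial>steps P \<pi> h0 s n)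
       = (\<integral>\<^sup>+\<tau>. (\<integral>\<^sup>+s'. F (fst \<tau> h) (\<pi> h (fst \<tau> h)) s' \<partial>P h (fst \<tau> h) (\<pi> h (fst \<tau> h))) \<partial>steps P \<pi> h0 s n)"
  using assms
proof (induction n arbitrary: h0 s)
  case 0
  then show ?case by simp
next
  case (Suc n)
  show ?case
  proof (cases "h = h0")
    case True
    define C where "C = (\<integral>\<^sup>+s'. F s (\<pi> h0 s) s' \<partial>P h0 s (\<pi> h0 s))"
    have L: "(\<integral>\<^sup>+\<tau>. F (fst \<tau> h) (snd \<tau> h) (fst \<tau> (Suc h)) \<partial>steps P \<pi> h0 s (Suc n)) = C"
    proof -
      have "(\<integral>\<^sup>+\<tau>. F (fst \<tau> h) (snd \<tau> h) (fst \<tau> (Suc h)) \<partial>steps P \<pi> h0 s (Suc n))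
          = (\<integral>\<^sup>+s'. (\<integral>\<^sup>+\<tau>. F s (\<pi> h0 s) (fst \<tau> (Suc h0)) \<partial>steps P \<pi> (Suc h0) s' n) \<partial>P h0 s (\<pi> h0 s))"
        using True by (simp add: split_beta)
      also have "\<dots> = (\<integral>\<^sup>+s'. F s (\<pi> h0 s) s' \<partial>P h0 s (\<pi> h0 s))"
        by (intro nn_integral_cong nn_integral_pmf_const_AE) (auto dest: steps_start)
      finally show ?thesis by (simp add: C_def)
    qed
    have R: "(\<integral>\<^sup>+\<tau>. (\<integral>\<^sup>+s'. F (fst \<tau> h) (\<pi> h (fst \<tau> h)) s' \<partial>P h (fst \<tau> h) (\<pi> h (fst \<tau> h))) \<partial>steps P \<pi> h0 s (Suc n)) = C"
    proof -
      have "(\<integral>\<^sup>+\<tau>. (\<integral>\<^sup>+s'. F (fst \<tau> h) (\<pi> h (fst \<tau> h)) s' \<partial>P h (fst \<tau> h) (\<pi> h (fst \<tau> h))) \<partial>steps P \<pi> h0 s (Suc n))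
          = (\<integral>\<^sup>+s'. (\<integral>\<^sup>+\<tau>. C \<partial>steps P \<pi> (Suc h0) s' n) \<partial>P h0 s (\<pi> h0 s))"
        using True by (simp add: split_beta C_def)
      also have "\<dots> = (\<integral>\<^sup>+s'. C \<partial>P h0 s (\<pi> h0 s))"
        by (simp add: measure_pmf.emeasure_space_1)
      also have "\<dots> = C" by (simp add: measure_pmf.emeasure_space_1)
      finally show ?thesis .
    qed
    show ?thesis using L R by simp
  next
    case False
    then have h1: "Suc h0 \<le> h" "h < Suc h0 + n" using Suc.prems by auto
    have "(\<integral>\<^sup>+\<tau>. F (fst \<tau> h) (snd \<tau> h) (fst \<tau> (Suc h)) \<partial>steps P \<pi> h0 s (Suc n))
        = (\<integral>\<^sup>+s'. (\<integral>\<^sup>+\<tau>. F (fst \<tau> h) (snd \<tau> h) (fst \<tau> (Suc h)) \<partial>steps P \<pi> (Suc h0) s' n) \<partial>P h0 s (\<pi> h0 s))"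
      using False h1 by (simp add: split_beta)
    also have "\<dots> = (\<integral>\<^sup>+s'. (\<integral>\<^sup>+\<tau>. (\<integral>\<^sup>+s''. F (fst \<tau> h) (\<pi> h (fst \<tau> h)) s'' \<partial>P h (fst \<tau> h) (\<pi> h (fst \<tau> h))) \<partial>steps P \<pi> (Suc h0) s' n) \<partial>P h0 s (\<pi> h0 s))"
      using Suc.IH[OF h1] by simp
    also have "\<dots> = (\<integral>\<^sup>+\<tau>. (\<integral>\<^sup>+s'. F (fst \<tau> h) (\<pi> h (fst \<tau> h)) s' \<partial>P h (fst \<tau> h) (\<pi> h (fst \<tau> h))) \<partial>steps P \<pi> h0 s (Suc n))"
      using False h1 by (simp add: split_beta)
    finally show ?thesis .
  qed
qed

primrec Yst :: "(nat \<Rightarrow> 'x list \<Rightarrow> real) \<Rightarrow> real \<Rightarrow> nat \<Rightarrow> 'x list \<Rightarrow> real" where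
  "Yst Z c 0 hist = Z 0 hist"
| "Yst Z c (Suc N) hist = (if c \<le> Yst Z c N hist then Yst Z c N hist else Z (Suc N) hist)"

lemma Yst_prefix:
  assumes "\<And>m hist t. m \<le> length hist \<Longrightarrow> Z m (hist @ t) = Z m hist"
  shows "N \<le> length hist \<Longrightarrow> Yst Z c N (hist @ t) = Yst Z c N hist"
  by (induction N) (auto simp: assms)

lemma Yst_nonneg: "(\<And>m hist. 0 \<le> Z m hist) \<Longrightarrow> 0 \<le> Yst Z c N hist"
  by (induction N) auto

lemma Yst_cross: "m \<le> N \<Longrightarrow> c \<le> Z m hist \<Longrightarrow> c \<le> Yst Z c N hist"
proof (induction N)
  case 0
  then show ?case by simp
next
  case (Suc N)
  then show ?case by (cases "m \<le> N") (auto simp: le_Suc_eq)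
qed

lemma Yst_below: "\<not> c \<le> Yst Z c N hist \<Longrightarrow> Yst Z c N hist = Z N hist"
  by (cases N) (auto split: if_splits)

lemma ville:
  fixes R :: "nat \<Rightarrow> 'x list pmf" and E :: "nat \<Rightarrow> 'x list \<Rightarrow> 'x pmf" and Z :: "nat \<Rightarrow> 'x list \<Rightarrow> real"
  assumes R0: "R 0 = return_pmf []"
    and RS: "\<And>N. R (Suc N) = bind_pmf (R N) (\<lambda>hist. map_pmf (\<lambda>\<tau>. hist @ [\<tau>]) (E N hist))"
    and pre: "\<And>m hist t. m \<le> length hist \<Longrightarrow> Z m (hist @ t) = Z m hist"
    and Zpos: "\<And>m hist. 0 \<le> Z m hist"
    and Z0: "Z 0 [] \<le> 1"
    and sup: "\<And>N hist. length hist = N \<Longrightarrow> (\<integral>\<^sup>+\<tau>. ennreal (Z (Suc N) (hist @ [\<tau>])) \<partial>E N hist) \<le> ennreal (Z N hist)"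
    and c: "0 < c"
  shows "measure_pmf.prob (R N) {hist. \<exists>m \<le> N. c \<le> Z m hist} \<le> 1 / c"
proof -
  have len: "hist \<in> set_pmf (R N) \<Longrightarrow> length hist = N" for N hist
  proof (induction N arbitrary: hist)
    case 0 then show ?case by (simp add: R0)
  next
    case (Suc N) then show ?case by (auto simp: RS)
  qed
  have int: "(\<integral>\<^sup>+hist. ennreal (Yst Z c N hist) \<partial>R N) \<le> 1" for N
  proof (induction N)
    case 0
    then show ?case using Z0 by (simp add: R0)
  next
    case (Suc N)
    have inner: "(\<integral>\<^sup>+\<tau>. ennreal (Yst Z c (Suc N) (hist @ [\<tau>])) \<partial>E N hist) \<le> ennreal (Yst Z c N hist)"
      if "hist \<in> set_pmf (R N)" for hist
    proof -
      have l: "length hist = N" using len[OF that] .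
      have yp: "Yst Z c N (hist @ [\<tau>]) = Yst Z c N hist" for \<tau>
        using Yst_prefix[of Z N hist c "[\<tau>]"] pre l by auto
      show ?thesis
      proof (cases "c \<le> Yst Z c N hist")
        case True
        then have "(\<integral>\<^sup>+\<tau>. ennreal (Yst Z c (Suc N) (hist @ [\<tau>])) \<partial>E N hist) = ennreal (Yst Z c N hist)"
          by (intro nn_integral_pmf_const_AE) (simp add: yp)
        then show ?thesis by simp
      next
        case False
        then have "(\<integral>\<^sup>+\<tau>. ennreal (Yst Z c (Suc N) (hist @ [\<tau>])) \<partial>E N hist) = (\<integral>\<^sup>+\<tau>. ennreal (Z (Suc N) (hist @ [\<tau>])) \<partial>E N hist)"
          by (intro nn_integral_cong) (simp add: yp)
        also have "\<dots> \<le> ennreal (Z N hist)" using sup[OF l] .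
        also have "Z N hist = Yst Z c N hist" using Yst_below[OF False] by simp
        finally show ?thesis .
      qed
    qed
    have "(\<integral>\<^sup>+hist. ennreal (Yst Z c (Suc N) hist) \<partial>R (Suc N))
        = (\<integral>\<^sup>+hist. (\<integral>\<^sup>+\<tau>. ennreal (Yst Z c (Suc N) (hist @ [\<tau>])) \<partial>E N hist) \<partial>R N)"
      by (simp add: RS)
    also have "\<dots> \<le> (\<integral>\<^sup>+hist. ennreal (Yst Z c N hist) \<partial>R N)"
      by (rule nn_integral_mono_AE) (auto simp: AE_measure_pmf_iff inner simp del: Yst.simps)
    also have "\<dots> \<le> 1" by (rule Suc.IH)
    finally show ?case .
  qed
  define A where "A = {hist. \<exists>m \<le> N. c \<le> Z m hist}"
  have "ennreal c * emeasure (measure_pmf (R N)) A = (\<integral>\<^sup>+hist. ennreal c * indicator A hist \<partial>R N)"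
    by (simp add: nn_integral_cmult_indicator)
  also have "\<dots> \<le> (\<integral>\<^sup>+hist. ennreal (Yst Z c N hist) \<partial>R N)"
  proof (rule nn_integral_mono)
    fix hist
    show "ennreal c * indicator A hist \<le> ennreal (Yst Z c N hist)"
    proof (cases "hist \<in> A")
      case True
      then obtain m where "m \<le> N" "c \<le> Z m hist" by (auto simp: A_def)
      then have "c \<le> Yst Z c N hist" by (rule Yst_cross)
      then show ?thesis using True by (simp add: ennreal_leI)
    next
      case False
      then show ?thesis by simp
    qed
  qed
  also have "\<dots> \<le> 1" by (rule int)
  finally have "ennreal c * ennreal (measure_pmf.prob (R N) A) \<le> 1"
    by (simp add: measure_pmf.emeasure_eq_measure)
  then have "ennreal (c * measure_pmf.prob (R N) A) \<le> ennreal 1"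
    using c by (simp add: ennreal_mult)
  then have "c * measure_pmf.prob (R N) A \<le> 1"
    by (subst (asm) ennreal_le_iff) auto
  then show ?thesis using c by (simp add: A_def field_simps)
qed



lemma data_prefix:
  "m \<le> length hist \<Longrightarrow> data \<phi> lam selV (hist @ t) h m = data \<phi> lam selV hist h m"
  by (induction m) (auto simp: nth_append Let_def)

lemma data_snoc:
  assumes "length hist = N"
  shows "data \<phi> lam selV (hist @ [\<tau>]) h (Suc N) =
     data \<phi> lam selV hist h N @
       [(feat \<phi> (fst \<tau> h) (snd \<tau> h) (selV (Suc N) h (LamOf lam (data \<phi> lam selV hist h N)) (fst \<tau> h) (snd \<tau> h)),
         selV (Suc N) h (LamOf lam (data \<phi> lam selV hist h N)) (fst \<tau> h) (snd \<tau> h) (fst \<tau> (Suc h)))]"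
  using assms data_prefix[of N hist \<phi> lam selV "[\<tau>]" h] by (simp add: Let_def nth_append)

lemma feat_scale: "feat \<phi> s a (\<lambda>s'. c * W s') = c *\<^sub>R feat \<phi> s a W"
  by (simp add: feat_def scaleR_sum_right)

lemma feat_norm:
  assumes phi_bound: "\<forall>s a V. (\<forall>s'. 0 \<le> V s' \<and> V s' \<le> 1) \<longrightarrow> norm (feat \<phi> s a V) \<le> 1"
    and V: "V \<in> Vset H"
  shows "norm (feat \<phi> s a V) \<le> real H"
proof (cases "H = 0")
  case True
  have "\<forall>s'. V s' = 0"
  proof
    fix s' show "V s' = 0" using V True unfolding Vset_def by (metis (mono_tags) mem_Collect_eq of_nat_0 order_antisym)
  qed
  then have "feat \<phi> s a V = 0" by (simp add: feat_def)
  then show ?thesis by simp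
next
  case False
  then have H0: "0 < real H" by simp
  have "feat \<phi> s a V = feat \<phi> s a (\<lambda>s'. real H * (V s' / real H))" using H0 by simp
  also have "\<dots> = real H *\<^sub>R feat \<phi> s a (\<lambda>s'. V s' / real H)" by (rule feat_scale)
  finally have eq: "feat \<phi> s a V = real H *\<^sub>R feat \<phi> s a (\<lambda>s'. V s' / real H)" .
  have "\<forall>s'. 0 \<le> V s' / real H \<and> V s' / real H \<le> 1" using V H0 by (auto simp: Vset_def)
  then have "norm (feat \<phi> s a (\<lambda>s'. V s' / real H)) \<le> 1"
    using phi_bound[rule_format, of "\<lambda>s'. V s' / real H" s a] by simp
  then show ?thesis using H0 by (simp add: eq)
qed

lemma data_bound:
  assumes phi_bound: "\<forall>s a V. (\<forall>s'. 0 \<le> V s' \<and> V s' \<le> 1) \<longrightarrow> norm (feat \<phi> s a V) \<le> 1"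
    and selV: "\<forall>k h L s a. selV k h L s a \<in> Vset H"
  shows "p \<in> set (data \<phi> lam selV hist h n) \<Longrightarrow> norm (fst p) \<le> real H"
proof (induction n)
  case 0 then show ?case by simp
next
  case (Suc n)
  define V where "V = selV (Suc n) h (LamOf lam (data \<phi> lam selV hist h n)) (fst (hist!n) h) (snd (hist!n) h)"
  from Suc.prems have "p \<in> set (data \<phi> lam selV hist h n) \<or> fst p = feat \<phi> (fst (hist!n) h) (snd (hist!n) h) V"
    by (auto simp: Let_def V_def)
  then show ?case
  proof
    assume "p \<in> set (data \<phi> lam selV hist h n)" then show ?thesis by (rule Suc.IH)
  next
    assume "fst p = feat \<phi> (fst (hist!n) h) (snd (hist!n) h) V"
    moreover have "V \<in> Vset H" using selV by (simp add: V_def)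
    ultimately show ?thesis using feat_norm[OF phi_bound, of V H] by simp
  qed
qed

lemma LamOf_diag: "LamOf lam D $ i $ i = lam + sum_list (map (\<lambda>(x,y). (x$i)^2) D)"
proof (induction D rule: rev_induct)
  case Nil then show ?case by (simp add: LamOf_def mat_def)
next
  case (snoc p D)
  then show ?case by (cases p) (simp add: LamOf_snoc outer_def power2_eq_square)
qed

lemma LamOf_diag_le:
  assumes "\<forall>p \<in> set D. norm (fst p) \<le> Hr"
  shows "LamOf lam D $ i $ i \<le> lam + real (length D) * Hr^2"
proof -
  have "sum_list (map (\<lambda>(x,y). (x$i)^2) D) \<le> real (length D) * Hr^2"
    using assms
  proof (induction D)
    case Nil then show ?case by simp
  next
    case (Cons p D)
    obtain x y where p: "p = (x,y)" by (cases p)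
    have "\<bar>x$i\<bar> \<le> Hr" using Cons.prems p component_le_norm_cart[of x i] by auto
    then have "\<bar>x$i\<bar>^2 \<le> Hr^2" by (rule power_mono) simp
    then have "(x$i)^2 \<le> Hr^2" by simp
    then show ?case using Cons by (simp add: p algebra_simps)
  qed
  then show ?thesis by (simp add: LamOf_diag)
qed

lemma ld_bound:
  fixes D :: "((real^'d) \<times> real) list"
  assumes lam: "0 < lam" and "\<forall>p \<in> set D. norm (fst p) \<le> Hr"
  shows "ld lam D \<le> real CARD('d) * ln (1 + real (length D) * Hr^2 / lam)"
proof -
  have "det (LamOf lam D) \<le> (\<Prod>i\<in>UNIV. LamOf lam D $ i $ i)"
    by (rule hadamard[OF LamOf_symm LamOf_posdef[OF lam]])
  also have "\<dots> \<le> (\<Prod>i\<in>(UNIV::'d set). lam + real (length D) * Hr^2)"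
    using LamOf_diag_le[OF assms(2)] less_imp_le[OF posdef_diag[OF LamOf_posdef[OF lam]]]
    by (intro prod_mono conjI) auto
  also have "\<dots> = (lam + real (length D) * Hr^2) ^ CARD('d)" by simp
  finally have dle: "det (LamOf lam D) \<le> (lam + real (length D) * Hr^2) ^ CARD('d)" .
  have dpos: "0 < det (LamOf lam D)" by (rule det_LamOf_pos[OF lam])
  have pos2: "0 < lam + real (length D) * Hr^2" using lam by (simp add: add_pos_nonneg)
  have "ln (det (LamOf lam D)) \<le> ln ((lam + real (length D) * Hr^2) ^ CARD('d))"
    using dle dpos by simp
  also have "\<dots> = real CARD('d) * ln (lam + real (length D) * Hr^2)"
    using pos2 by (simp add: ln_realpow)
  finally have "ld lam D \<le> real CARD('d) * (ln (lam + real (length D) * Hr^2) - ln lam)"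
    by (simp add: ld_def right_diff_distrib)
  also have "ln (lam + real (length D) * Hr^2) - ln lam = ln (1 + real (length D) * Hr^2 / lam)"
  proof -
    have "1 + real (length D) * Hr^2 / lam = (lam + real (length D) * Hr^2) / lam"
      using lam by (simp add: field_simps)
    then show ?thesis using lam pos2 by (simp add: ln_div)
  qed
  finally show ?thesis .
qed

lemma sum_yx:
  "sum_list (map (\<lambda>(x,y). y *\<^sub>R x) D) = SS \<theta> D + sum_list (map (\<lambda>(x,y). outer x) D) *v \<theta>"
proof (induction D)
  case Nil then show ?case by (simp add: SS_def)
next
  case (Cons p D)
  obtain x y where p: "p = (x,y)" by (cases p)
  have e: "y *\<^sub>R x = (y - \<theta> \<bullet> x) *\<^sub>R x + outer x *v \<theta>"
    by (simp add: outer_mv inner_commute scaleR_diff_left)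
  have "sum_list (map (\<lambda>(x,y). y *\<^sub>R x) (p # D)) = y *\<^sub>R x + sum_list (map (\<lambda>(x,y). y *\<^sub>R x) D)"
    by (simp add: p)
  also have "\<dots> = ((y - \<theta> \<bullet> x) *\<^sub>R x + outer x *v \<theta>) + (SS \<theta> D + sum_list (map (\<lambda>(x,y). outer x) D) *v \<theta>)"
    by (simp only: e Cons.IH)
  also have "\<dots> = ((y - \<theta> \<bullet> x) *\<^sub>R x + SS \<theta> D) + (outer x + sum_list (map (\<lambda>(x,y). outer x) D)) *v \<theta>"
    by (simp only: matrix_vector_mult_add_rdistrib add_ac)
  finally show ?case by (simp add: p SS_def)
qed

lemma psd_cs:
  fixes M :: "real^'n^'n"
  assumes sy: "symm M" and psd: "\<And>z. 0 \<le> z \<bullet> (M *v z)"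
  shows "(u \<bullet> (M *v v))^2 \<le> (u \<bullet> (M *v u)) * (v \<bullet> (M *v v))"
proof -
  define p where "p = u \<bullet> (M *v u)"
  define q where "q = u \<bullet> (M *v v)"
  define r where "r = v \<bullet> (M *v v)"
  have vu: "v \<bullet> (M *v u) = q" using symm_inner[OF sy, of v u] by (simp add: q_def inner_commute)
  have quad: "0 \<le> p + 2 * t * q + t^2 * r" for t
  proof -
    have "0 \<le> (u + t *\<^sub>R v) \<bullet> (M *v (u + t *\<^sub>R v))" by (rule psd)
    also have "\<dots> = u \<bullet> (M *v u) + t * (u \<bullet> (M *v v)) + t * (v \<bullet> (M *v u)) + t * t * (v \<bullet> (M *v v))"
      by (simp only: matrix_vector_right_distrib matrix_vector_mult_scaleR inner_add_left inner_add_right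
          inner_scaleR_left inner_scaleR_right) (simp add: algebra_simps)
    also have "\<dots> = p + 2 * t * q + t^2 * r"
      unfolding vu p_def[symmetric] q_def[symmetric] r_def[symmetric] by (simp add: power2_eq_square)
    finally show ?thesis .
  qed
  have r0: "0 \<le> r" using psd by (simp add: r_def)
  show ?thesis
  proof (cases "r = 0")
    case True
    have "q = 0"
    proof (rule ccontr)
      assume "q \<noteq> 0"
      have "0 \<le> p + 2 * (- (p + 1) / (2 * q)) * q" using quad[of "- (p + 1) / (2 * q)"] True by simp
      also have "\<dots> = -1" using \<open>q \<noteq> 0\<close> by (simp add: field_simps)
      finally show False by simp
    qed
    then show ?thesis using True by (simp add: q_def[symmetric] p_def[symmetric] r_def[symmetric])
  next
    case False
    then have rp: "0 < r" using r0 by simp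
    have "0 \<le> p + 2 * (- q / r) * q + (- q / r)^2 * r" by (rule quad)
    also have "\<dots> = p - q^2 / r" using rp by (simp add: field_simps power2_eq_square)
    finally have "q^2 / r \<le> p" by simp
    then have "q^2 \<le> p * r" using rp by (simp add: divide_le_eq)
    then show ?thesis by (simp add: p_def q_def r_def)
  qed
qed



lemma symm_from_inner:
  assumes "\<And>x y. x \<bullet> ((M::real^'n^'n) *v y) = (M *v x) \<bullet> y"
  shows "symm M"
proof -
  have "M$j$i = M$i$j" for i j
  proof -
    have "axis j 1 \<bullet> (M *v axis i 1) = (M *v axis j 1) \<bullet> axis i 1" by (rule assms)
    then show ?thesis by (simp add: inner_axis inner_axis' matrix_vector_mult_basis column_def)
  qed
  then show ?thesis by (simp add: symm_def transpose_def vec_eq_iff)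
qed

lemma err_bound:
  fixes D :: "((real^'d) \<times> real) list" and \<theta> :: "real^'d"
  assumes lam: "0 < lam"
  shows "mnorm (LamOf lam D) (matrix_inv (LamOf lam D) *v sum_list (map (\<lambda>(x,y). y *\<^sub>R x) D) - \<theta>)
           \<le> sqrt (qf lam \<theta> D) + sqrt lam * norm \<theta>"
proof -
  define V where "V = LamOf lam D"
  define Vi where "Vi = matrix_inv V"
  define S where "S = SS \<theta> D"
  have inv: "invertible V" by (simp add: V_def LamOf_inv[OF lam])
  have sy: "symm V" by (simp add: V_def LamOf_symm)
  have syi: "symm Vi" unfolding Vi_def by (rule symm_from_inner) (rule symm_inv_inner[OF sy inv])
  have psdi: "0 \<le> z \<bullet> (Vi *v z)" for z unfolding Vi_def
    by (rule inv_psd[OF _ sy]) (simp add: V_def LamOf_posdef[OF lam])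
  have sumo: "sum_list (map (\<lambda>(x,y). outer x) D) = V - lam *\<^sub>R mat 1" by (simp add: V_def LamOf_def)
  have lamI: "(lam *\<^sub>R mat 1 :: real^'d^'d) *v z = lam *\<^sub>R z" for z
    by (simp add: scaleR_matrix_vector_assoc[symmetric])
  have e1: "Vi *v sum_list (map (\<lambda>(x,y). y *\<^sub>R x) D) - \<theta> = Vi *v (S - lam *\<^sub>R \<theta>)"
    unfolding sum_yx[of D \<theta>] sumo S_def[symmetric]
    by (simp add: matrix_vector_right_distrib matrix_vector_mult_diff_rdistrib matrix_vector_mult_diff_distrib
        lamI Vi_def inv_mv[OF inv] matrix_vector_mult_scaleR)
  define z where "z = S - lam *\<^sub>R \<theta>"
  have mn: "mnorm V (Vi *v z) = sqrt (z \<bullet> (Vi *v z))"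
    by (simp add: mnorm_def Vi_def inv_mv[OF inv] inner_commute)
  define qS where "qS = S \<bullet> (Vi *v S)"
  define qT where "qT = \<theta> \<bullet> (Vi *v \<theta>)"
  define b where "b = S \<bullet> (Vi *v \<theta>)"
  have qS0: "0 \<le> qS" by (simp add: qS_def psdi)
  have qT0: "0 \<le> qT" by (simp add: qT_def psdi)
  have TS: "\<theta> \<bullet> (Vi *v S) = b" using symm_inner[OF syi, of \<theta> S] by (simp add: b_def inner_commute)
  have cs: "b^2 \<le> qS * qT" using psd_cs[OF syi psdi] by (simp add: b_def qS_def qT_def)
  have "\<bar>b\<bar> \<le> sqrt qS * sqrt qT"
  proof -
    have "\<bar>b\<bar> = sqrt (b^2)" by simp
    also have "\<dots> \<le> sqrt (qS * qT)" using cs by (rule real_sqrt_le_mono)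
    finally show ?thesis by (simp add: real_sqrt_mult)
  qed
  then have bb: "- b \<le> sqrt qS * sqrt qT" by simp
  have "z \<bullet> (Vi *v z) = qS - 2 * lam * b + lam^2 * qT"
    unfolding z_def
    by (simp add: matrix_vector_mult_diff_distrib matrix_vector_mult_scaleR inner_diff_left inner_diff_right
        qS_def[symmetric] qT_def[symmetric] b_def[symmetric] TS power2_eq_square algebra_simps)
  also have "\<dots> \<le> qS + 2 * lam * (sqrt qS * sqrt qT) + lam^2 * qT"
  proof -
    have "lam * (- b) \<le> lam * (sqrt qS * sqrt qT)" using bb lam by (intro mult_left_mono) auto
    then show ?thesis by (simp add: algebra_simps)
  qed
  also have "\<dots> = (sqrt qS + lam * sqrt qT)^2"
    using qS0 qT0 by (simp add: power2_eq_square algebra_simps)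
  finally have "sqrt (z \<bullet> (Vi *v z)) \<le> sqrt ((sqrt qS + lam * sqrt qT)^2)" by (rule real_sqrt_le_mono)
  also have "\<dots> = sqrt qS + lam * sqrt qT" using lam qS0 qT0 by simp
  finally have m1: "mnorm V (Vi *v z) \<le> sqrt qS + lam * sqrt qT" using mn by simp
  have "qT \<le> (norm \<theta>)^2 / lam" unfolding qT_def Vi_def V_def by (rule inv_quad_le[OF lam])
  then have "sqrt qT \<le> sqrt ((norm \<theta>)^2 / lam)" by (rule real_sqrt_le_mono)
  also have "\<dots> = norm \<theta> / sqrt lam" by (simp add: real_sqrt_divide)
  finally have "lam * sqrt qT \<le> lam * (norm \<theta> / sqrt lam)" using lam by (intro mult_left_mono) auto
  also have "\<dots> = sqrt lam * norm \<theta>"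
    using lam by (simp add: field_simps)
  finally have m2: "lam * sqrt qT \<le> sqrt lam * norm \<theta>" .
  have "qS = qf lam \<theta> D" by (simp add: qS_def qf_def S_def Vi_def V_def)
  then show ?thesis using m1 m2 e1 by (simp add: V_def Vi_def z_def)
qed

lemma trans_expect:
  fixes \<theta> :: "nat \<Rightarrow> real^'d" and \<phi> :: "'s::finite \<Rightarrow> 'a \<Rightarrow> 's \<Rightarrow> real^'d"
  assumes nn: "\<forall>s'. 0 \<le> \<theta> h \<bullet> \<phi> s a s'" and sm: "(\<Sum>s'\<in>UNIV. \<theta> h \<bullet> \<phi> s a s') = 1"
  shows "measure_pmf.expectation (trans \<theta> \<phi> h s a) V = \<theta> h \<bullet> feat \<phi> s a V"
proof -
  have prob: "(\<integral>\<^sup>+x. ennreal (\<theta> h \<bullet> \<phi> s a x) \<partial>count_space UNIV) = 1"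
    using nn sm by (simp add: nn_integral_count_space_finite)
  have pmf: "pmf (trans \<theta> \<phi> h s a) s' = \<theta> h \<bullet> \<phi> s a s'" for s'
    unfolding trans_def by (rule pmf_embed_pmf) (use nn prob in auto)
  have "measure_pmf.expectation (trans \<theta> \<phi> h s a) V = (\<Sum>s'\<in>UNIV. pmf (trans \<theta> \<phi> h s a) s' *\<^sub>R V s')"
    by (rule integral_measure_pmf) auto
  also have "\<dots> = (\<Sum>s'\<in>UNIV. V s' * (\<theta> h \<bullet> \<phi> s a s'))" by (simp add: pmf mult.commute)
  also have "\<dots> = \<theta> h \<bullet> feat \<phi> s a V" by (simp add: feat_def inner_sum_right)
  finally show ?thesis .
qed

lemma arith_final:
  fixes Hr lam \<delta> d K q :: real
  assumes Hr: "1 \<le> Hr" and K: "1 \<le> K" and lam: "0 < lam" "lam \<le> 1" and \<delta>: "0 < \<delta>" "\<delta> < 1" and d: "1 \<le> d"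
    and q: "q < Hr^2 / 2 * ln (2 * Hr / \<delta>) + Hr^2 * (d * ln (1 + K * Hr^2 / lam))"
  shows "q \<le> Hr^2 * (d * ln (4 * Hr^3 * K / (lam * \<delta>)))"
proof -
  define X where "X = K * Hr^2 / lam"
  have X1: "1 \<le> X"
  proof -
    have "1 \<le> K * Hr^2" using Hr K by (metis mult_mono' one_le_power mult_1_left zero_le_one order_trans)
    also have "\<dots> \<le> K * Hr^2 / lam" using lam K Hr by (simp add: le_divide_eq mult_le_cancel_left1)
    finally show ?thesis by (simp add: X_def)
  qed
  have l1: "ln (1 + X) \<le> ln (2 * X)" using X1 by simp
  have pos2: "0 < 2 * Hr / \<delta>" using Hr \<delta> by simp
  have lnp: "0 \<le> ln (2 * Hr / \<delta>)"
  proof -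
    have "1 \<le> 2 * Hr / \<delta>" using Hr \<delta> by (simp add: le_divide_eq)
    then show ?thesis by simp
  qed
  have prodeq: "4 * Hr^3 * K / (lam * \<delta>) = (2 * X) * (2 * Hr / \<delta>)"
    using lam \<delta> by (simp add: X_def field_simps power3_eq_cube power2_eq_square)
  have L: "ln (4 * Hr^3 * K / (lam * \<delta>)) = ln (2 * X) + ln (2 * Hr / \<delta>)"
    unfolding prodeq using X1 pos2 by (intro ln_mult_pos) auto
  have H2: "0 \<le> Hr^2" by simp
  have "Hr^2 / 2 * ln (2 * Hr / \<delta>) \<le> Hr^2 * (d * ln (2 * Hr / \<delta>))"
  proof -
    have "1/2 * ln (2 * Hr / \<delta>) \<le> d * ln (2 * Hr / \<delta>)" using d lnp by (intro mult_right_mono) auto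
    from mult_left_mono[OF this H2] show ?thesis by simp
  qed
  moreover have "Hr^2 * (d * ln (1 + X)) \<le> Hr^2 * (d * ln (2 * X))"
    using l1 d H2 by (intro mult_left_mono) auto
  ultimately have "q \<le> Hr^2 * (d * ln (2 * Hr / \<delta>)) + Hr^2 * (d * ln (2 * X))"
    using q by (simp add: X_def)
  also have "\<dots> = Hr^2 * (d * ln (4 * Hr^3 * K / (lam * \<delta>)))" unfolding L by (simp add: algebra_simps)
  finally show ?thesis .
qed

lemma GG_nil:
  assumes "0 < lam"
  shows "GG Hr lam \<theta> ([] :: ((real^'d) \<times> real) list) = 0"
  using assms by (simp add: GG_def qf_def SS_def ld_def det_LamOf_base ln_realpow)



lemma length_data: "length (data \<phi> lam selV hist h n) = n"
  by (induction n) (simp_all add: Let_def)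

theorem lemma4:
  fixes \<phi> :: "'s::finite \<Rightarrow> 'a::finite \<Rightarrow> 's \<Rightarrow> real^'d"
    and \<theta> :: "nat \<Rightarrow> real^'d"
    and B \<delta> lam \<beta> :: real and H K :: nat and s1 :: 's
    and selV :: "nat \<Rightarrow> nat \<Rightarrow> real^'d^'d \<Rightarrow> 's \<Rightarrow> 'a \<Rightarrow> ('s \<Rightarrow> real)"
    and selA :: "nat \<Rightarrow> nat \<Rightarrow> ('a \<Rightarrow> real) \<Rightarrow> 'a"
  assumes phi_bound: "\<forall>s a V. (\<forall>s'. 0 \<le> V s' \<and> V s' \<le> 1) \<longrightarrow> norm (feat \<phi> s a V) \<le> 1"
    and theta_bound: "\<forall>h\<in>{1..H}. norm (\<theta> h) \<le> B"
    and P_nonneg: "\<forall>h\<in>{1..H}. \<forall>s a s'. 0 \<le> \<theta> h \<bullet> \<phi> s a s'"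
    and P_sum: "\<forall>h\<in>{1..H}. \<forall>s a. (\<Sum>s'\<in>UNIV. \<theta> h \<bullet> \<phi> s a s') = 1"
    and delta_pos: "0 < \<delta>" and delta_lt1: "\<delta> < 1"
    and lam_def: "lam = 1 / B\<^sup>2"
    and beta_def: "\<beta> = real H * sqrt (real CARD('d) * ln (4 * real H ^ 3 * real K / (lam * \<delta>)))
                        + sqrt lam * B"
    and selV_argmax: "\<forall>k h L s a. selV k h L s a \<in> Vset H \<and>
         (\<forall>V\<in>Vset H. mnorm (matrix_inv L) (feat \<phi> s a V)
                       \<le> mnorm (matrix_inv L) (feat \<phi> s a (selV k h L s a)))"
    and selA_argmax: "\<forall>k h q. q (selA k h q) = Max (range q)"
  shows "measure_pmf.prob (run \<theta> \<phi> H lam \<beta> selV selA s1 K)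
           {hist. \<forall>k\<in>{1..K}. \<forall>h\<in>{1..H}.
              mnorm (Lam \<phi> lam selV hist k h) (thetahat \<phi> lam selV hist k h - \<theta> h) \<le> \<beta>}
         \<ge> 1 - \<delta> / 2"
proof -
  define Hr where "Hr = real H"
  define cc where "cc = 2 * Hr / \<delta>"
  define Z where "Z = (\<lambda>h m hist. exp (2 / Hr^2 * GG Hr lam (\<theta> h) (data \<phi> lam selV hist h m)))"
  define Bad where "Bad = (\<lambda>h. {hist. \<exists>m \<le> K. cc \<le> Z h m hist})"
  define R where "R = run \<theta> \<phi> H lam \<beta> selV selA s1"
  have selV_in: "selV k h L s a \<in> Vset H" for k h L s a using selV_argmax by blast
  have Bge: "1 \<le> B" if h: "h \<in> {1..H}" for h
  proof -
    define s :: 's where "s = undefined"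
    define a :: 'a where "a = undefined"
    define f where "f = feat \<phi> s a (\<lambda>_. 1)"
    have "\<theta> h \<bullet> f = (\<Sum>s'\<in>UNIV. \<theta> h \<bullet> \<phi> s a s')" by (simp add: f_def feat_def inner_sum_right)
    also have "\<dots> = 1" using P_sum h by blast
    finally have e1: "\<theta> h \<bullet> f = 1" .
    have nf: "norm f \<le> 1" unfolding f_def using phi_bound by simp
    have "1 \<le> norm (\<theta> h) * norm f" using e1 norm_cauchy_schwarz[of "\<theta> h" f] by simp
    also have "\<dots> \<le> norm (\<theta> h)" using nf by (simp add: mult_left_le)
    also have "\<dots> \<le> B" using theta_bound h by blast
    finally show ?thesis .
  qed
  have lampos: "0 < lam" and lam1: "lam \<le> 1" if "h \<in> {1..H}" for h
  proof -
    have "1 \<le> B" by (rule Bge[OF that])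
    then have b2: "1 \<le> B^2" by (simp add: one_le_power)
    then have b0: "0 < B^2" by linarith
    show "0 < lam" using b0 by (simp add: lam_def)
    show "lam \<le> 1" using b0 b2 by (simp add: lam_def divide_le_eq_1)
  qed
  have probBad: "measure_pmf.prob (R K) (Bad h) \<le> \<delta> / (2 * Hr)" if h: "h \<in> {1..H}" for h
  proof -
    have lp: "0 < lam" by (rule lampos[OF h])
    have Hr0: "0 < Hr" using h by (simp add: Hr_def)
    have cc0: "0 < cc" using Hr0 delta_pos by (simp add: cc_def)
    have sup: "(\<integral>\<^sup>+\<tau>. ennreal (Z h (Suc N) (hist @ [\<tau>]))
                  \<partial>steps (trans \<theta> \<phi>) (pol \<phi> H lam \<beta> selV selA hist (Suc N)) 1 s1 H)
               \<le> ennreal (Z h N hist)" if len: "length hist = N" for N hist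
    proof -
      define \<pi> where "\<pi> = pol \<phi> H lam \<beta> selV selA hist (Suc N)"
      define D where "D = data \<phi> lam selV hist h N"
      define W where "W = (\<lambda>s a. selV (Suc N) h (LamOf lam D) s a)"
      define F where "F = (\<lambda>s a s'. ennreal (exp (2 / Hr^2 * GG Hr lam (\<theta> h) (D @ [(feat \<phi> s a (W s a), W s a s')]))))"
      have eqZ: "ennreal (Z h (Suc N) (hist @ [\<tau>])) = F (fst \<tau> h) (snd \<tau> h) (fst \<tau> (Suc h))" for \<tau>
        unfolding Z_def data_snoc[OF len] by (simp add: F_def D_def W_def)
      have inner: "(\<integral>\<^sup>+s'. F s a s' \<partial>trans \<theta> \<phi> h s a) \<le> ennreal (exp (2 / Hr^2 * GG Hr lam (\<theta> h) D))" for s a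
      proof -
        have V0: "0 \<le> W s a s'" and V1: "W s a s' \<le> Hr" for s'
          using selV_in[of "Suc N" h "LamOf lam D" s a] by (auto simp: W_def Vset_def Hr_def)
        have m: "measure_pmf.expectation (trans \<theta> \<phi> h s a) (W s a) = \<theta> h \<bullet> feat \<phi> s a (W s a)"
          by (rule trans_expect) (use P_nonneg P_sum h in auto)
        show ?thesis unfolding F_def by (rule stepb[OF lp Hr0 V0 V1 m])
      qed
      have "(\<integral>\<^sup>+\<tau>. ennreal (Z h (Suc N) (hist @ [\<tau>])) \<partial>steps (trans \<theta> \<phi>) \<pi> 1 s1 H)
          = (\<integral>\<^sup>+\<tau>. F (fst \<tau> h) (snd \<tau> h) (fst \<tau> (Suc h)) \<partial>steps (trans \<theta> \<phi>) \<pi> 1 s1 H)"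
        by (simp add: eqZ)
      also have "\<dots> = (\<integral>\<^sup>+\<tau>. (\<integral>\<^sup>+s'. F (fst \<tau> h) (\<pi> h (fst \<tau> h)) s' \<partial>trans \<theta> \<phi> h (fst \<tau> h) (\<pi> h (fst \<tau> h))) \<partial>steps (trans \<theta> \<phi>) \<pi> 1 s1 H)"
        by (rule steps_exp) (use h in auto)
      also have "\<dots> \<le> (\<integral>\<^sup>+\<tau>. ennreal (exp (2 / Hr^2 * GG Hr lam (\<theta> h) D)) \<partial>steps (trans \<theta> \<phi>) \<pi> 1 s1 H)"
        by (intro nn_integral_mono inner)
      also have "\<dots> = ennreal (exp (2 / Hr^2 * GG Hr lam (\<theta> h) D))"
        by (simp add: measure_pmf.emeasure_space_1)
      also have "\<dots> = ennreal (Z h N hist)" by (simp add: Z_def D_def)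
      finally show ?thesis by (simp add: \<pi>_def)
    qed
    have "measure_pmf.prob (R K) {hist. \<exists>m \<le> K. cc \<le> Z h m hist} \<le> 1 / cc"
    proof (rule ville[where E = "\<lambda>N hist. steps (trans \<theta> \<phi>) (pol \<phi> H lam \<beta> selV selA hist (Suc N)) 1 s1 H"])
      show "R 0 = return_pmf []" by (simp add: R_def)
      show "R (Suc N) = R N \<bind> (\<lambda>hist. map_pmf (\<lambda>\<tau>. hist @ [\<tau>]) (steps (trans \<theta> \<phi>) (pol \<phi> H lam \<beta> selV selA hist (Suc N)) 1 s1 H))" for N
        by (simp add: R_def)
      show "Z h m (hist @ t) = Z h m hist" if "m \<le> length hist" for m hist t
        using that by (simp add: Z_def data_prefix)
      show "0 \<le> Z h m hist" for m hist by (simp add: Z_def)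
      show "Z h 0 [] \<le> 1" by (simp add: Z_def GG_nil[OF lp])
      show "0 < cc" by (rule cc0)
    qed (rule sup)
    then show ?thesis using Hr0 delta_pos by (simp add: Bad_def cc_def)
  qed
  have union: "measure_pmf.prob (R K) (\<Union>h\<in>{1..H}. Bad h) \<le> \<delta> / 2"
  proof -
    have "measure_pmf.prob (R K) (\<Union>h\<in>{1..H}. Bad h) \<le> (\<Sum>h\<in>{1..H}. measure_pmf.prob (R K) (Bad h))"
      by (rule measure_pmf.finite_measure_subadditive_finite) auto
    also have "\<dots> \<le> (\<Sum>h\<in>{1..H}. \<delta> / (2 * Hr))" by (intro sum_mono probBad)
    also have "\<dots> \<le> \<delta> / 2"
    proof (cases "H = 0")
      case True then show ?thesis using delta_pos by simp
    next
      case False then show ?thesis by (simp add: Hr_def)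
    qed
    finally show ?thesis .
  qed
  have good: "UNIV - (\<Union>h\<in>{1..H}. Bad h) \<subseteq>
      {hist. \<forall>k\<in>{1..K}. \<forall>h\<in>{1..H}.
              mnorm (Lam \<phi> lam selV hist k h) (thetahat \<phi> lam selV hist k h - \<theta> h) \<le> \<beta>}"
  proof (intro subsetI CollectI ballI)
    fix hist k h
    assume nb: "hist \<in> UNIV - (\<Union>h\<in>{1..H}. Bad h)" and k: "k \<in> {1..K}" and h: "h \<in> {1..H}"
    have lp: "0 < lam" by (rule lampos[OF h])
    have l1: "lam \<le> 1" by (rule lam1[OF h])
    have Hr1: "1 \<le> Hr" using h by (simp add: Hr_def)
    define D where "D = data \<phi> lam selV hist h (k - 1)"
    have "hist \<notin> Bad h" using nb h by blast
    moreover have "k - 1 \<le> K" using k by auto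
    ultimately have "\<not> cc \<le> Z h (k - 1) hist" unfolding Bad_def by blast
    then have Zlt: "Z h (k - 1) hist < cc" by simp
    have cc0: "0 < cc" using Hr1 delta_pos by (simp add: cc_def)
    have "exp (2 / Hr^2 * GG Hr lam (\<theta> h) D) < exp (ln cc)"
      using Zlt cc0 by (simp add: Z_def D_def)
    then have "2 / Hr^2 * GG Hr lam (\<theta> h) D < ln cc" by (simp only: exp_less_cancel_iff)
    then have GGlt: "GG Hr lam (\<theta> h) D < Hr^2 / 2 * ln cc"
      using Hr1 by (simp add: field_simps)
    have lenD: "length D = k - 1" by (simp add: D_def length_data)
    have nD: "\<forall>p \<in> set D. norm (fst p) \<le> Hr"
    proof
      fix p assume "p \<in> set D"
      moreover have selVall: "\<forall>k h L s a. selV k h L s a \<in> Vset H" using selV_in by blast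
      ultimately show "norm (fst p) \<le> Hr"
        using data_bound[OF phi_bound selVall, where p=p and lam=lam and hist=hist and h=h and n="k-1"]
        by (simp add: D_def Hr_def)
    qed
    have "ld lam D \<le> real CARD('d) * ln (1 + real (length D) * Hr^2 / lam)"
      by (rule ld_bound[OF lp nD])
    also have "\<dots> \<le> real CARD('d) * ln (1 + real K * Hr^2 / lam)"
    proof -
      have "real (length D) * Hr^2 / lam \<le> real K * Hr^2 / lam"
        using lenD k lp by (intro divide_right_mono mult_right_mono) auto
      then have "ln (1 + real (length D) * Hr^2 / lam) \<le> ln (1 + real K * Hr^2 / lam)"
        using lp by (intro ln_mono) (auto intro: add_pos_nonneg)
      then show ?thesis by (intro mult_left_mono) auto
    qed
    finally have ldle: "ld lam D \<le> real CARD('d) * ln (1 + real K * Hr^2 / lam)" .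
    have "qf lam (\<theta> h) D = GG Hr lam (\<theta> h) D + Hr^2 * ld lam D" by (simp add: GG_def)
    also have "\<dots> < Hr^2 / 2 * ln cc + Hr^2 * (real CARD('d) * ln (1 + real K * Hr^2 / lam))"
      using GGlt ldle by (intro add_less_le_mono mult_left_mono) auto
    finally have qlt: "qf lam (\<theta> h) D < Hr^2 / 2 * ln (2 * Hr / \<delta>) + Hr^2 * (real CARD('d) * ln (1 + real K * Hr^2 / lam))"
      by (simp add: cc_def)
    have qle: "qf lam (\<theta> h) D \<le> Hr^2 * (real CARD('d) * ln (4 * Hr^3 * real K / (lam * \<delta>)))"
      by (rule arith_final[OF Hr1 _ lp l1 delta_pos delta_lt1 _ qlt]) (use k in auto)
    have "sqrt (qf lam (\<theta> h) D) \<le> sqrt (Hr^2 * (real CARD('d) * ln (4 * Hr^3 * real K / (lam * \<delta>))))"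
      by (rule real_sqrt_le_mono[OF qle])
    also have "\<dots> = Hr * sqrt (real CARD('d) * ln (4 * Hr^3 * real K / (lam * \<delta>)))"
      using Hr1 by (simp add: real_sqrt_mult)
    finally have sq: "sqrt (qf lam (\<theta> h) D) \<le> Hr * sqrt (real CARD('d) * ln (4 * Hr^3 * real K / (lam * \<delta>)))" .
    have nth: "sqrt lam * norm (\<theta> h) \<le> sqrt lam * B" using theta_bound h lp by (intro mult_left_mono) auto
    have "mnorm (Lam \<phi> lam selV hist k h) (thetahat \<phi> lam selV hist k h - \<theta> h)
        = mnorm (LamOf lam D) (matrix_inv (LamOf lam D) *v sum_list (map (\<lambda>(x,y). y *\<^sub>R x) D) - \<theta> h)"
      by (simp add: Lam_def thetahat_def D_def)
    also have "\<dots> \<le> sqrt (qf lam (\<theta> h) D) + sqrt lam * norm (\<theta> h)" by (rule err_bound[OF lp])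
    also have "\<dots> \<le> \<beta>" using sq nth by (simp add: beta_def Hr_def)
    finally show "mnorm (Lam \<phi> lam selV hist k h) (thetahat \<phi> lam selV hist k h - \<theta> h) \<le> \<beta>" .
  qed
  have "1 - \<delta> / 2 \<le> 1 - measure_pmf.prob (R K) (\<Union>h\<in>{1..H}. Bad h)" using union by simp
  also have "\<dots> = measure_pmf.prob (R K) (UNIV - (\<Union>h\<in>{1..H}. Bad h))"
    using measure_pmf.prob_compl[of "\<Union>h\<in>{1..H}. Bad h" "R K"] by simp
  also have "\<dots> \<le> measure_pmf.prob (R K) {hist. \<forall>k\<in>{1..K}. \<forall>h\<in>{1..H}.
              mnorm (Lam \<phi> lam selV hist k h) (thetahat \<phi> lam selV hist k h - \<theta> h) \<le> \<beta>}"
    by (rule measure_pmf.finite_measure_mono[OF good]) simp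
  finally show ?thesis by (simp add: R_def)
qed

end
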